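(* Let $\mathbb{C}$ be an isostable squares category. For every $n\ge0$, the forgetful functor $U_n:S^{\square}_n\mathbb{C}\to\mathcal{H}_n\mathbb{C}$, sending an object $(A_{jk})$ to its top row $O=A_{00}\rightarrowtail A_{01}\rightarrowtail\cdots\rightarrowtail A_{0n}$, is an equivalence of categories.
   Context: A squares category is a flat double category (squares uniquely determined by their boundary; we say a boundary "is a square") with a distinguished object $O$ initial in the horizontal category $\mathcal{H}_{\mathbb{C}}$ (morphisms $\rightarrowtail$) and terminal in the vertical category $\mathcal{V}_{\mathbb{C}}$ (morphisms $\twoheadrightarrow$). A vertical $f:A\twoheadrightarrow B$ is a vertical weak equivalence if the boundary (top $O\rightarrowtail A$, left $\mathrm{id}_O$, right $f$, bottom $O\rightarrowtail B$) is a square; a horizontal $g:A\rightarrowtail B$ is a horizontal weak equivalence if the boundary (top $g$, left $A\twoheadrightarrow O$, right $B\twoheadrightarrow O$, bottom $\mathrm{id}_O$) is a square. Vertical natural transformations between double functors of flat double categories: vertical components $\tau_A$ with $(Ff,\tau_A,\tau_{A'},Gf)$ a square for each horizontal $f$ and commuting naturality squares in the vertical category; $\mathrm{Fun}^v$ is the functor category. With $\boxdot$ the flat double category generated by one square (corners $a,b,c,d$, horizontal $a\rightarrowtail b,c\rightarrowtail d$, vertical $a\twoheadrightarrow c,b\twoheadrightarrow d$), $i:\mathrm{span}\hookrightarrow\boxdot$ on $a\rightarrowtail b,a\twoheadrightarrow c$ and $j:\mathrm{cospan}\hookrightarrow\boxdot$ on $b\twoheadrightarrow d,c\rightarrowtail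 d$: a squares category is stable if (i) $i^*$ on $\mathrm{Fun}^v(-,\mathbb{C})$ has a section functor $s$, (ii) there is a natural transformation $w:si^*\Rightarrow\mathrm{id}$ with components the identity at $a,b,c$, (iii) $j^*$ has a section functor $t$, (iv) there is a natural transformation $u:tj^*\Rightarrow\mathrm{id}$ with components the identity at $b,c,d$ and a vertical weak equivalence at $a$. It is isostable if it is stable, its weak equivalences are invertible, and for every boundary with top $f:A\rightarrowtail B$, bottom $k:C\rightarrowtail D$ and vertical isomorphisms $g:A\twoheadrightarrow C$, $h:B\twoheadrightarrow D$, this boundary is a square iff the boundary with top $k$, left $g^{-1}$, right $h^{-1}$, bottom $f$ is a square. $S^{\square}_n\mathbb{C}$: objects are families $(A_{jk})_{0\le j\le k\le n}$ with $A_{jj}=O$, horizontal $A_{jk}\rightarrowtail A_{j,k+1}$, vertical $A_{jk}\twoheadrightarrow A_{j+1,k}$, each unit cell ($j<k<n$) a square; morphisms are families of vertical morphisms $A_{jk}\twoheadrightarrow A'_{jk}$ such that every cell formed with a horizontal generator is a square and every cell formed with a vertical generator commutes in $\mathcal{V}_{\mathbb{C}}$ (their components are vertical weak equivalences). $\mathcal{H}_n\mathbb{C}$ is the category whose objects are sequences $O\rightarrowtail A_1\rightarrowtail\cdots\rightarrowtail A_n$ of horizontal morphisms and whose morphisms are families of vertical weak equivalences $A_i\twoheadrightarrow A'_i$ (identity on $O$) such that each boundary $(A_i\rightarrowtail A_{i+1}, A_i\twoheadrightarrow A_i', A_{i+1}\twoheadrightarrow A'_{i+1}, A'_i\rightarrowtail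 A'_{i+1})$ is a square. *)

theory Defs
  imports Main
begin

section \<open>Categories (concrete, with carriers)\<close>

record ('o, 'a) cat =
  cObj  :: "'o set"
  cArr  :: "'a set"
  cDom  :: "'a \<Rightarrow> 'o"
  cCod  :: "'a \<Rightarrow> 'o"
  cId   :: "'o \<Rightarrow> 'a"
  cComp :: "'a \<Rightarrow> 'a \<Rightarrow> 'a"   (* cComp g f = g o f *)

definition is_category :: "('o, 'a) cat \<Rightarrow> bool" where
  "is_category K \<longleftrightarrow>
     (\<forall>x\<in>cObj K. cId K x \<in> cArr K \<and> cDom K (cId K x) = x \<and> cCod K (cId K x) = x) \<and>
     (\<forall>f\<in>cArr K. cDom K f \<in> cObj K \<and> cCod K f \<in> cObj K) \<and>
     (\<forall>f\<in>cArr K. \<forall>g\<in>cArr K. cCod K f = cDom K g \<longrightarrow>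
        cComp K g f \<in> cArr K \<and> cDom K (cComp K g f) = cDom K f \<and> cCod K (cComp K g f) = cCod K g) \<and>
     (\<forall>f\<in>cArr K. cComp K f (cId K (cDom K f)) = f \<and> cComp K (cId K (cCod K f)) f = f) \<and>
     (\<forall>f\<in>cArr K. \<forall>g\<in>cArr K. \<forall>h\<in>cArr K. cCod K f = cDom K g \<longrightarrow> cCod K g = cDom K h \<longrightarrow>
        cComp K h (cComp K g f) = cComp K (cComp K h g) f)"

definition cat_iso :: "('o, 'a) cat \<Rightarrow> 'a \<Rightarrow> bool" where
  "cat_iso K f \<longleftrightarrow> f \<in> cArr K \<and>
     (\<exists>g\<in>cArr K. cDom K g = cCod K f \<and> cCod K g = cDom K f \<and>
        cComp K g f = cId K (cDom K f) \<and> cComp K f g = cId K (cCod K f))"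

type_synonym ('o1, 'a1, 'o2, 'a2) functor_data = "('o1 \<Rightarrow> 'o2) \<times> ('a1 \<Rightarrow> 'a2)"

definition is_functor ::
  "('o1, 'a1) cat \<Rightarrow> ('o2, 'a2) cat \<Rightarrow> ('o1, 'a1, 'o2, 'a2) functor_data \<Rightarrow> bool" where
  "is_functor K L F \<longleftrightarrow>
     (\<forall>x\<in>cObj K. fst F x \<in> cObj L) \<and>
     (\<forall>f\<in>cArr K. snd F f \<in> cArr L \<and> cDom L (snd F f) = fst F (cDom K f)
                  \<and> cCod L (snd F f) = fst F (cCod K f)) \<and>
     (\<forall>x\<in>cObj K. snd F (cId K x) = cId L (fst F x)) \<and>
     (\<forall>f\<in>cArr K. \<forall>g\<in>cArr K. cCod K f = cDom K g \<longrightarrow>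
        snd F (cComp K g f) = cComp L (snd F g) (snd F f))"

definition fid :: "('o, 'a, 'o, 'a) functor_data" where
  "fid = (\<lambda>x. x, \<lambda>f. f)"

definition fcomp :: "('o2, 'a2, 'o3, 'a3) functor_data \<Rightarrow> ('o1, 'a1, 'o2, 'a2) functor_data
                     \<Rightarrow> ('o1, 'a1, 'o3, 'a3) functor_data" where
  "fcomp G F = (fst G \<circ> fst F, snd G \<circ> snd F)"

definition is_nat_trans ::
  "('o1, 'a1) cat \<Rightarrow> ('o2, 'a2) cat \<Rightarrow> ('o1, 'a1, 'o2, 'a2) functor_data
     \<Rightarrow> ('o1, 'a1, 'o2, 'a2) functor_data \<Rightarrow> ('o1 \<Rightarrow> 'a2) \<Rightarrow> bool" where
  "is_nat_trans K L F G \<eta> \<longleftrightarrow>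
     (\<forall>x\<in>cObj K. \<eta> x \<in> cArr L \<and> cDom L (\<eta> x) = fst F x \<and> cCod L (\<eta> x) = fst G x) \<and>
     (\<forall>f\<in>cArr K. cComp L (\<eta> (cCod K f)) (snd F f) = cComp L (snd G f) (\<eta> (cDom K f)))"

definition is_nat_iso ::
  "('o1, 'a1) cat \<Rightarrow> ('o2, 'a2) cat \<Rightarrow> ('o1, 'a1, 'o2, 'a2) functor_data
     \<Rightarrow> ('o1, 'a1, 'o2, 'a2) functor_data \<Rightarrow> ('o1 \<Rightarrow> 'a2) \<Rightarrow> bool" where
  "is_nat_iso K L F G \<eta> \<longleftrightarrow> is_nat_trans K L F G \<eta> \<and> (\<forall>x\<in>cObj K. cat_iso L (\<eta> x))"

definition equivalence_of_categories ::
  "('o1, 'a1) cat \<Rightarrow> ('o2, 'a2) cat \<Rightarrow> ('o1, 'a1, 'o2, 'a2) functor_data \<Rightarrow> bool" where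
  "equivalence_of_categories K L F \<longleftrightarrow> is_functor K L F \<and>
     (\<exists>G. is_functor L K G \<and>
        (\<exists>\<eta>. is_nat_iso K K fid (fcomp G F) \<eta>) \<and>
        (\<exists>\<epsilon>. is_nat_iso L L (fcomp F G) fid \<epsilon>))"

section \<open>Flat double categories\<close>

record ('o, 'h, 'v) dblcat =
  dObj  :: "'o set"
  hArr  :: "'h set"
  hDom  :: "'h \<Rightarrow> 'o"
  hCod  :: "'h \<Rightarrow> 'o"
  hId   :: "'o \<Rightarrow> 'h"
  hComp :: "'h \<Rightarrow> 'h \<Rightarrow> 'h"
  vArr  :: "'v set"
  vDom  :: "'v \<Rightarrow> 'o"
  vCod  :: "'v \<Rightarrow> 'o"
  vId   :: "'o \<Rightarrow> 'v"
  vComp :: "'v \<Rightarrow> 'v \<Rightarrow> 'v"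
  Sq    :: "'h \<Rightarrow> 'v \<Rightarrow> 'v \<Rightarrow> 'h \<Rightarrow> bool"  (* Sq top left right bottom *)

definition Hcat :: "('o, 'h, 'v) dblcat \<Rightarrow> ('o, 'h) cat" where
  "Hcat C = \<lparr>cObj = dObj C, cArr = hArr C, cDom = hDom C, cCod = hCod C,
             cId = hId C, cComp = hComp C\<rparr>"

definition Vcat :: "('o, 'h, 'v) dblcat \<Rightarrow> ('o, 'v) cat" where
  "Vcat C = \<lparr>cObj = dObj C, cArr = vArr C, cDom = vDom C, cCod = vCod C,
             cId = vId C, cComp = vComp C\<rparr>"

text \<open>A flat double category: squares are determined by their boundary, so they are
  encoded by the predicate Sq on boundaries; Sq must be closed under horizontal and
  vertical pasting and contain the identity squares.\<close>
definition flat_double_category :: "('o, 'h, 'v) dblcat \<Rightarrow> bool" where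
  "flat_double_category C \<longleftrightarrow>
     is_category (Hcat C) \<and> is_category (Vcat C) \<and>
     (\<forall>f g h k. Sq C f g h k \<longrightarrow>
        f \<in> hArr C \<and> k \<in> hArr C \<and> g \<in> vArr C \<and> h \<in> vArr C \<and>
        hDom C f = vDom C g \<and> hCod C f = vDom C h \<and>
        hDom C k = vCod C g \<and> hCod C k = vCod C h) \<and>
     (\<forall>f\<in>hArr C. Sq C f (vId C (hDom C f)) (vId C (hCod C f)) f) \<and>
     (\<forall>g\<in>vArr C. Sq C (hId C (vDom C g)) g g (hId C (vCod C g))) \<and>
     (\<forall>f g h k f' h' k'. Sq C f g h k \<longrightarrow> Sq C f' h h' k' \<longrightarrow>
        Sq C (hComp C f' f) g h' (hComp C k' k)) \<and>
     (\<forall>f g h k g' h' k'. Sq C f g h k \<longrightarrow> Sq C k g' h' k' \<longrightarrow>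
        Sq C f (vComp C g' g) (vComp C h' h) k')"

section \<open>Squares categories\<close>

definition squares_category :: "('o, 'h, 'v) dblcat \<Rightarrow> 'o \<Rightarrow> bool" where
  "squares_category C Z \<longleftrightarrow> flat_double_category C \<and> Z \<in> dObj C \<and>
     (\<forall>A\<in>dObj C. \<exists>!h. h \<in> hArr C \<and> hDom C h = Z \<and> hCod C h = A) \<and>
     (\<forall>A\<in>dObj C. \<exists>!v. v \<in> vArr C \<and> vDom C v = A \<and> vCod C v = Z)"

definition hinit :: "('o, 'h, 'v) dblcat \<Rightarrow> 'o \<Rightarrow> 'o \<Rightarrow> 'h" where
  "hinit C Z A = (THE h. h \<in> hArr C \<and> hDom C h = Z \<and> hCod C h = A)"

definition vterm :: "('o, 'h, 'v) dblcat \<Rightarrow> 'o \<Rightarrow> 'o \<Rightarrow> 'v" where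
  "vterm C Z A = (THE v. v \<in> vArr C \<and> vDom C v = A \<and> vCod C v = Z)"

definition vweq :: "('o, 'h, 'v) dblcat \<Rightarrow> 'o \<Rightarrow> 'v \<Rightarrow> bool" where
  "vweq C Z f \<longleftrightarrow> f \<in> vArr C \<and>
     Sq C (hinit C Z (vDom C f)) (vId C Z) f (hinit C Z (vCod C f))"

definition hweq :: "('o, 'h, 'v) dblcat \<Rightarrow> 'o \<Rightarrow> 'h \<Rightarrow> bool" where
  "hweq C Z g \<longleftrightarrow> g \<in> hArr C \<and>
     Sq C g (vterm C Z (hDom C g)) (vterm C Z (hCod C g)) (hId C Z)"

section \<open>Vertical functor categories Fun^v(span, C), Fun^v(square, C), Fun^v(cospan, C)\<close>

text \<open>A double functor span -> C is a pair (f, g) with f horizontal, g vertical and common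
  domain (corner a). A vertical transformation is a triple of vertical components at
  a, b, c.\<close>

definition spanObj :: "('o, 'h, 'v) dblcat \<Rightarrow> ('h \<times> 'v) set" where
  "spanObj C = {(f, g). f \<in> hArr C \<and> g \<in> vArr C \<and> hDom C f = vDom C g}"

definition spanMor :: "('o, 'h, 'v) dblcat \<Rightarrow> 'h \<times> 'v \<Rightarrow> 'h \<times> 'v \<Rightarrow> 'v \<times> 'v \<times> 'v \<Rightarrow> bool" where
  "spanMor C X Y t = (case X of (f, g) \<Rightarrow> case Y of (f', g') \<Rightarrow> case t of (ta, tb, tc) \<Rightarrow>
     ta \<in> vArr C \<and> vDom C ta = hDom C f \<and> vCod C ta = hDom C f' \<and>
     tb \<in> vArr C \<and> vDom C tb = hCod C f \<and> vCod C tb = hCod C f' \<and>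
     tc \<in> vArr C \<and> vDom C tc = vCod C g \<and> vCod C tc = vCod C g' \<and>
     Sq C f ta tb f' \<and> vComp C tc g = vComp C g' ta)"

definition FunSpan :: "('o, 'h, 'v) dblcat \<Rightarrow>
    ('h \<times> 'v, ('h \<times> 'v) \<times> ('h \<times> 'v) \<times> ('v \<times> 'v \<times> 'v)) cat" where
  "FunSpan C = \<lparr>
     cObj = spanObj C,
     cArr = {(X, Y, t). X \<in> spanObj C \<and> Y \<in> spanObj C \<and> spanMor C X Y t},
     cDom = (\<lambda>(X, Y, t). X),
     cCod = (\<lambda>(X, Y, t). Y),
     cId = (\<lambda>(f, g). ((f, g), (f, g), (vId C (hDom C f), vId C (hCod C f), vId C (vCod C g)))),
     cComp = (\<lambda>(Y, Z, (sa, sb, sc)) (X, Y', (ta, tb, tc)).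
                (X, Z, (vComp C sa ta, vComp C sb tb, vComp C sc tc)))\<rparr>"

text \<open>A double functor from the free square to C is a square (f, g, h, k) of C
  (top f : a -> b, left g : a -> c, right h : b -> d, bottom k : c -> d).\<close>

definition sqObj :: "('o, 'h, 'v) dblcat \<Rightarrow> ('h \<times> 'v \<times> 'v \<times> 'h) set" where
  "sqObj C = {(f, g, h, k). Sq C f g h k}"

definition sqMor :: "('o, 'h, 'v) dblcat \<Rightarrow> 'h \<times> 'v \<times> 'v \<times> 'h \<Rightarrow> 'h \<times> 'v \<times> 'v \<times> 'h
                      \<Rightarrow> 'v \<times> 'v \<times> 'v \<times> 'v \<Rightarrow> bool" where
  "sqMor C X Y t = (case X of (f, g, h, k) \<Rightarrow> case Y of (f', g', h', k') \<Rightarrow>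
     case t of (ta, tb, tc, td) \<Rightarrow>
     ta \<in> vArr C \<and> vDom C ta = hDom C f \<and> vCod C ta = hDom C f' \<and>
     tb \<in> vArr C \<and> vDom C tb = hCod C f \<and> vCod C tb = hCod C f' \<and>
     tc \<in> vArr C \<and> vDom C tc = hDom C k \<and> vCod C tc = hDom C k' \<and>
     td \<in> vArr C \<and> vDom C td = hCod C k \<and> vCod C td = hCod C k' \<and>
     Sq C f ta tb f' \<and> Sq C k tc td k' \<and>
     vComp C tc g = vComp C g' ta \<and> vComp C td h = vComp C h' tb)"

definition FunSq :: "('o, 'h, 'v) dblcat \<Rightarrow>
    ('h \<times> 'v \<times> 'v \<times> 'h,
     ('h \<times> 'v \<times> 'v \<times> 'h) \<times> ('h \<times> 'v \<times> 'v \<times> 'h) \<times> ('v \<times> 'v \<times> 'v \<times> 'v)) cat" where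
  "FunSq C = \<lparr>
     cObj = sqObj C,
     cArr = {(X, Y, t). X \<in> sqObj C \<and> Y \<in> sqObj C \<and> sqMor C X Y t},
     cDom = (\<lambda>(X, Y, t). X),
     cCod = (\<lambda>(X, Y, t). Y),
     cId = (\<lambda>(f, g, h, k). ((f, g, h, k), (f, g, h, k),
              (vId C (hDom C f), vId C (hCod C f), vId C (hDom C k), vId C (hCod C k)))),
     cComp = (\<lambda>(Y, Z, (sa, sb, sc, sd)) (X, Y', (ta, tb, tc, td)).
                (X, Z, (vComp C sa ta, vComp C sb tb, vComp C sc tc, vComp C sd td)))\<rparr>"

text \<open>A double functor cospan -> C is a pair (h, k), h : b -> d vertical,
  k : c -> d horizontal; transformations have components at b, c, d.\<close>

definition cospanObj :: "('o, 'h, 'v) dblcat \<Rightarrow> ('v \<times> 'h) set" where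
  "cospanObj C = {(h, k). h \<in> vArr C \<and> k \<in> hArr C \<and> vCod C h = hCod C k}"

definition cospanMor :: "('o, 'h, 'v) dblcat \<Rightarrow> 'v \<times> 'h \<Rightarrow> 'v \<times> 'h \<Rightarrow> 'v \<times> 'v \<times> 'v \<Rightarrow> bool" where
  "cospanMor C X Y t = (case X of (h, k) \<Rightarrow> case Y of (h', k') \<Rightarrow> case t of (tb, tc, td) \<Rightarrow>
     tb \<in> vArr C \<and> vDom C tb = vDom C h \<and> vCod C tb = vDom C h' \<and>
     tc \<in> vArr C \<and> vDom C tc = hDom C k \<and> vCod C tc = hDom C k' \<and>
     td \<in> vArr C \<and> vDom C td = hCod C k \<and> vCod C td = hCod C k' \<and>
     Sq C k tc td k' \<and> vComp C td h = vComp C h' tb)"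

definition FunCospan :: "('o, 'h, 'v) dblcat \<Rightarrow>
    ('v \<times> 'h, ('v \<times> 'h) \<times> ('v \<times> 'h) \<times> ('v \<times> 'v \<times> 'v)) cat" where
  "FunCospan C = \<lparr>
     cObj = cospanObj C,
     cArr = {(X, Y, t). X \<in> cospanObj C \<and> Y \<in> cospanObj C \<and> cospanMor C X Y t},
     cDom = (\<lambda>(X, Y, t). X),
     cCod = (\<lambda>(X, Y, t). Y),
     cId = (\<lambda>(h, k). ((h, k), (h, k), (vId C (vDom C h), vId C (hDom C k), vId C (hCod C k)))),
     cComp = (\<lambda>(Y, Z, (sb, sc, sd)) (X, Y', (tb, tc, td)).
                (X, Z, (vComp C sb tb, vComp C sc tc, vComp C sd td)))\<rparr>"

definition istar_o :: "'h \<times> 'v \<times> 'v \<times> 'h \<Rightarrow> 'h \<times> 'v" where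
  "istar_o X = (case X of (f, g, h, k) \<Rightarrow> (f, g))"

definition istar :: "('h \<times> 'v \<times> 'v \<times> 'h,
     ('h \<times> 'v \<times> 'v \<times> 'h) \<times> ('h \<times> 'v \<times> 'v \<times> 'h) \<times> ('v \<times> 'v \<times> 'v \<times> 'v),
     'h \<times> 'v, ('h \<times> 'v) \<times> ('h \<times> 'v) \<times> ('v \<times> 'v \<times> 'v)) functor_data" where
  "istar = (istar_o, \<lambda>(X, Y, (ta, tb, tc, td)). (istar_o X, istar_o Y, (ta, tb, tc)))"

definition jstar_o :: "'h \<times> 'v \<times> 'v \<times> 'h \<Rightarrow> 'v \<times> 'h" where
  "jstar_o X = (case X of (f, g, h, k) \<Rightarrow> (h, k))"

definition jstar :: "('h \<times> 'v \<times> 'v \<times> 'h,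
     ('h \<times> 'v \<times> 'v \<times> 'h) \<times> ('h \<times> 'v \<times> 'v \<times> 'h) \<times> ('v \<times> 'v \<times> 'v \<times> 'v),
     'v \<times> 'h, ('v \<times> 'h) \<times> ('v \<times> 'h) \<times> ('v \<times> 'v \<times> 'v)) functor_data" where
  "jstar = (jstar_o, \<lambda>(X, Y, (ta, tb, tc, td)). (jstar_o X, jstar_o Y, (tb, tc, td)))"

definition compA :: "'x \<times> 'y \<times> ('v \<times> 'v \<times> 'v \<times> 'v) \<Rightarrow> 'v" where
  "compA \<phi> = (case \<phi> of (X, Y, (ta, tb, tc, td)) \<Rightarrow> ta)"
definition compB :: "'x \<times> 'y \<times> ('v \<times> 'v \<times> 'v \<times> 'v) \<Rightarrow> 'v" where
  "compB \<phi> = (case \<phi> of (X, Y, (ta, tb, tc, td)) \<Rightarrow> tb)"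
definition compC :: "'x \<times> 'y \<times> ('v \<times> 'v \<times> 'v \<times> 'v) \<Rightarrow> 'v" where
  "compC \<phi> = (case \<phi> of (X, Y, (ta, tb, tc, td)) \<Rightarrow> tc)"
definition compD :: "'x \<times> 'y \<times> ('v \<times> 'v \<times> 'v \<times> 'v) \<Rightarrow> 'v" where
  "compD \<phi> = (case \<phi> of (X, Y, (ta, tb, tc, td)) \<Rightarrow> td)"

definition cornerA :: "('o, 'h, 'v) dblcat \<Rightarrow> 'h \<times> 'v \<times> 'v \<times> 'h \<Rightarrow> 'o" where
  "cornerA C X = (case X of (f, g, h, k) \<Rightarrow> hDom C f)"
definition cornerB :: "('o, 'h, 'v) dblcat \<Rightarrow> 'h \<times> 'v \<times> 'v \<times> 'h \<Rightarrow> 'o" where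
  "cornerB C X = (case X of (f, g, h, k) \<Rightarrow> hCod C f)"
definition cornerC :: "('o, 'h, 'v) dblcat \<Rightarrow> 'h \<times> 'v \<times> 'v \<times> 'h \<Rightarrow> 'o" where
  "cornerC C X = (case X of (f, g, h, k) \<Rightarrow> hDom C k)"
definition cornerD :: "('o, 'h, 'v) dblcat \<Rightarrow> 'h \<times> 'v \<times> 'v \<times> 'h \<Rightarrow> 'o" where
  "cornerD C X = (case X of (f, g, h, k) \<Rightarrow> hCod C k)"

section \<open>Stable and isostable squares categories\<close>

definition stable :: "('o, 'h, 'v) dblcat \<Rightarrow> 'o \<Rightarrow> bool" where
  "stable C Z \<longleftrightarrow> squares_category C Z \<and>
     (\<exists>s. is_functor (FunSpan C) (FunSq C) s \<and>
        (\<forall>X\<in>cObj (FunSpan C). fst istar (fst s X) = X) \<and>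
        (\<forall>\<phi>\<in>cArr (FunSpan C). snd istar (snd s \<phi>) = \<phi>) \<and>
        (\<exists>w. is_nat_trans (FunSq C) (FunSq C) (fcomp s istar) fid w \<and>
           (\<forall>X\<in>cObj (FunSq C).
              compA (w X) = vId C (cornerA C X) \<and>
              compB (w X) = vId C (cornerB C X) \<and>
              compC (w X) = vId C (cornerC C X)))) \<and>
     (\<exists>t. is_functor (FunCospan C) (FunSq C) t \<and>
        (\<forall>X\<in>cObj (FunCospan C). fst jstar (fst t X) = X) \<and>
        (\<forall>\<phi>\<in>cArr (FunCospan C). snd jstar (snd t \<phi>) = \<phi>) \<and>
        (\<exists>u. is_nat_trans (FunSq C) (FunSq C) (fcomp t jstar) fid u \<and>
           (\<forall>X\<in>cObj (FunSq C).
              vweq C Z (compA (u X)) \<and>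
              compB (u X) = vId C (cornerB C X) \<and>
              compC (u X) = vId C (cornerC C X) \<and>
              compD (u X) = vId C (cornerD C X))))"

definition isostable :: "('o, 'h, 'v) dblcat \<Rightarrow> 'o \<Rightarrow> bool" where
  "isostable C Z \<longleftrightarrow> stable C Z \<and>
     (\<forall>f. vweq C Z f \<longrightarrow> cat_iso (Vcat C) f) \<and>
     (\<forall>g. hweq C Z g \<longrightarrow> cat_iso (Hcat C) g) \<and>
     (\<forall>f k g h g' h'.
        f \<in> hArr C \<longrightarrow> k \<in> hArr C \<longrightarrow> g \<in> vArr C \<longrightarrow> h \<in> vArr C \<longrightarrow>
        vDom C g = hDom C f \<longrightarrow> vCod C g = hDom C k \<longrightarrow>
        vDom C h = hCod C f \<longrightarrow> vCod C h = hCod C k \<longrightarrow>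
        g' \<in> vArr C \<longrightarrow> vDom C g' = vCod C g \<longrightarrow> vCod C g' = vDom C g \<longrightarrow>
        vComp C g' g = vId C (vDom C g) \<longrightarrow> vComp C g g' = vId C (vCod C g) \<longrightarrow>
        h' \<in> vArr C \<longrightarrow> vDom C h' = vCod C h \<longrightarrow> vCod C h' = vDom C h \<longrightarrow>
        vComp C h' h = vId C (vDom C h) \<longrightarrow> vComp C h h' = vId C (vCod C h) \<longrightarrow>
        (Sq C f g h k \<longleftrightarrow> Sq C k g' h' f))"

section \<open>The categories S^square_n C and H_n C, and the forgetful functor\<close>

text \<open>Objects of S_n: triples (A, Ah, Av) where A j k is the object at position (j,k)
  (0 \<le> j \<le> k \<le> n), Ah j k : A j k \<rightarrowtail> A j (k+1) (j \<le> k < n) and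
  Av j k : A j k \<twoheadrightarrow> A (j+1) k (j < k \<le> n). Outside these index ranges the
  data is undefined (so that objects are determined by their actual data).\<close>

type_synonym ('o, 'h, 'v) sobj = "(nat \<Rightarrow> nat \<Rightarrow> 'o) \<times> (nat \<Rightarrow> nat \<Rightarrow> 'h) \<times> (nat \<Rightarrow> nat \<Rightarrow> 'v)"

definition is_sobj :: "('o, 'h, 'v) dblcat \<Rightarrow> 'o \<Rightarrow> nat \<Rightarrow> ('o, 'h, 'v) sobj \<Rightarrow> bool" where
  "is_sobj C Z n X = (case X of (A, Ah, Av) \<Rightarrow>
     (\<forall>j k. \<not> (j \<le> k \<and> k \<le> n) \<longrightarrow> A j k = undefined) \<and>
     (\<forall>j k. \<not> (j \<le> k \<and> k < n) \<longrightarrow> Ah j k = undefined) \<and>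
     (\<forall>j k. \<not> (j < k \<and> k \<le> n) \<longrightarrow> Av j k = undefined) \<and>
     (\<forall>j k. j \<le> k \<and> k \<le> n \<longrightarrow> A j k \<in> dObj C) \<and>
     (\<forall>j \<le> n. A j j = Z) \<and>
     (\<forall>j k. j \<le> k \<and> k < n \<longrightarrow>
        Ah j k \<in> hArr C \<and> hDom C (Ah j k) = A j k \<and> hCod C (Ah j k) = A j (Suc k)) \<and>
     (\<forall>j k. j < k \<and> k \<le> n \<longrightarrow>
        Av j k \<in> vArr C \<and> vDom C (Av j k) = A j k \<and> vCod C (Av j k) = A (Suc j) k) \<and>
     (\<forall>j k. j < k \<and> k < n \<longrightarrow>
        Sq C (Ah j k) (Av j k) (Av j (Suc k)) (Ah (Suc j) k)))"

definition is_smor :: "('o, 'h, 'v) dblcat \<Rightarrow> 'o \<Rightarrow> nat \<Rightarrow> ('o, 'h, 'v) sobj \<Rightarrow> ('o, 'h, 'v) sobj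
                        \<Rightarrow> (nat \<Rightarrow> nat \<Rightarrow> 'v) \<Rightarrow> bool" where
  "is_smor C Z n X Y \<phi> = (case X of (A, Ah, Av) \<Rightarrow> case Y of (B, Bh, Bv) \<Rightarrow>
     (\<forall>j k. \<not> (j \<le> k \<and> k \<le> n) \<longrightarrow> \<phi> j k = undefined) \<and>
     (\<forall>j k. j \<le> k \<and> k \<le> n \<longrightarrow>
        \<phi> j k \<in> vArr C \<and> vDom C (\<phi> j k) = A j k \<and> vCod C (\<phi> j k) = B j k \<and>
        vweq C Z (\<phi> j k)) \<and>
     (\<forall>j k. j \<le> k \<and> k < n \<longrightarrow> Sq C (Ah j k) (\<phi> j k) (\<phi> j (Suc k)) (Bh j k)) \<and>
     (\<forall>j k. j < k \<and> k \<le> n \<longrightarrow>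
        vComp C (\<phi> (Suc j) k) (Av j k) = vComp C (Bv j k) (\<phi> j k)))"

definition SCat :: "('o, 'h, 'v) dblcat \<Rightarrow> 'o \<Rightarrow> nat \<Rightarrow>
    (('o, 'h, 'v) sobj, ('o, 'h, 'v) sobj \<times> ('o, 'h, 'v) sobj \<times> (nat \<Rightarrow> nat \<Rightarrow> 'v)) cat" where
  "SCat C Z n = \<lparr>
     cObj = {X. is_sobj C Z n X},
     cArr = {(X, Y, \<phi>). is_sobj C Z n X \<and> is_sobj C Z n Y \<and> is_smor C Z n X Y \<phi>},
     cDom = (\<lambda>(X, Y, \<phi>). X),
     cCod = (\<lambda>(X, Y, \<phi>). Y),
     cId = (\<lambda>X. (X, X, \<lambda>j k. if j \<le> k \<and> k \<le> n then vId C (fst X j k) else undefined)),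
     cComp = (\<lambda>(Y, Z, \<psi>) (X, Y', \<phi>).
                (X, Z, \<lambda>j k. if j \<le> k \<and> k \<le> n then vComp C (\<psi> j k) (\<phi> j k) else undefined))\<rparr>"

type_synonym ('o, 'h) hobj = "(nat \<Rightarrow> 'o) \<times> (nat \<Rightarrow> 'h)"

definition is_hobj :: "('o, 'h, 'v) dblcat \<Rightarrow> 'o \<Rightarrow> nat \<Rightarrow> ('o, 'h) hobj \<Rightarrow> bool" where
  "is_hobj C Z n X = (case X of (A, a) \<Rightarrow>
     (\<forall>i. \<not> i \<le> n \<longrightarrow> A i = undefined) \<and>
     (\<forall>i. \<not> i < n \<longrightarrow> a i = undefined) \<and>
     A 0 = Z \<and>
     (\<forall>i \<le> n. A i \<in> dObj C) \<and>
     (\<forall>i < n. a i \<in> hArr C \<and> hDom C (a i) = A i \<and> hCod C (a i) = A (Suc i)))"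

definition is_hmor :: "('o, 'h, 'v) dblcat \<Rightarrow> 'o \<Rightarrow> nat \<Rightarrow> ('o, 'h) hobj \<Rightarrow> ('o, 'h) hobj
                        \<Rightarrow> (nat \<Rightarrow> 'v) \<Rightarrow> bool" where
  "is_hmor C Z n X Y \<phi> = (case X of (A, a) \<Rightarrow> case Y of (B, b) \<Rightarrow>
     (\<forall>i. \<not> i \<le> n \<longrightarrow> \<phi> i = undefined) \<and>
     (\<forall>i \<le> n. vweq C Z (\<phi> i) \<and> vDom C (\<phi> i) = A i \<and> vCod C (\<phi> i) = B i) \<and>
     \<phi> 0 = vId C Z \<and>
     (\<forall>i < n. Sq C (a i) (\<phi> i) (\<phi> (Suc i)) (b i)))"

definition HCat :: "('o, 'h, 'v) dblcat \<Rightarrow> 'o \<Rightarrow> nat \<Rightarrow>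
    (('o, 'h) hobj, ('o, 'h) hobj \<times> ('o, 'h) hobj \<times> (nat \<Rightarrow> 'v)) cat" where
  "HCat C Z n = \<lparr>
     cObj = {X. is_hobj C Z n X},
     cArr = {(X, Y, \<phi>). is_hobj C Z n X \<and> is_hobj C Z n Y \<and> is_hmor C Z n X Y \<phi>},
     cDom = (\<lambda>(X, Y, \<phi>). X),
     cCod = (\<lambda>(X, Y, \<phi>). Y),
     cId = (\<lambda>X. (X, X, \<lambda>i. if i \<le> n then vId C (fst X i) else undefined)),
     cComp = (\<lambda>(Y, Z, \<psi>) (X, Y', \<phi>).
                (X, Z, \<lambda>i. if i \<le> n then vComp C (\<psi> i) (\<phi> i) else undefined))\<rparr>"

definition U_obj :: "nat \<Rightarrow> ('o, 'h, 'v) sobj \<Rightarrow> ('o, 'h) hobj" where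
  "U_obj n X = (case X of (A, Ah, Av) \<Rightarrow>
     (\<lambda>i. if i \<le> n then A 0 i else undefined, \<lambda>i. if i < n then Ah 0 i else undefined))"

definition U_arr :: "nat \<Rightarrow> ('o, 'h, 'v) sobj \<times> ('o, 'h, 'v) sobj \<times> (nat \<Rightarrow> nat \<Rightarrow> 'v)
                     \<Rightarrow> ('o, 'h) hobj \<times> ('o, 'h) hobj \<times> (nat \<Rightarrow> 'v)" where
  "U_arr n F = (case F of (X, Y, \<phi>) \<Rightarrow>
     (U_obj n X, U_obj n Y, \<lambda>i. if i \<le> n then \<phi> 0 i else undefined))"

definition U_functor where
  "U_functor n = (U_obj n, U_arr n)"

end

theory Submission
  imports Defs
begin


lemma equiv_from_ff:
  fixes K :: "('o1,'a1) cat" and L :: "('o2,'a2) cat" and F and Go :: "'o2 \<Rightarrow> 'o1"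
  assumes K_id: "\<And>x. x\<in>cObj K \<Longrightarrow> cId K x \<in> cArr K \<and> cDom K (cId K x) = x \<and> cCod K (cId K x) = x"
  and K_comp: "\<And>f g. f\<in>cArr K \<Longrightarrow> g\<in>cArr K \<Longrightarrow> cCod K f = cDom K g \<Longrightarrow>
        cComp K g f \<in> cArr K \<and> cDom K (cComp K g f) = cDom K f \<and> cCod K (cComp K g f) = cCod K g"
  and K_dc: "\<And>f. f\<in>cArr K \<Longrightarrow> cDom K f \<in> cObj K \<and> cCod K f \<in> cObj K"
  and L_id: "\<And>x. x\<in>cObj L \<Longrightarrow> cId L x \<in> cArr L \<and> cDom L (cId L x) = x \<and> cCod L (cId L x) = x"
  and L_comp: "\<And>f g. f\<in>cArr L \<Longrightarrow> g\<in>cArr L \<Longrightarrow> cCod L f = cDom L g \<Longrightarrow>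
        cComp L g f \<in> cArr L \<and> cDom L (cComp L g f) = cDom L f \<and> cCod L (cComp L g f) = cCod L g"
  and L_dc: "\<And>f. f\<in>cArr L \<Longrightarrow> cDom L f \<in> cObj L \<and> cCod L f \<in> cObj L"
  and L_unit: "\<And>f. f\<in>cArr L \<Longrightarrow> cComp L f (cId L (cDom L f)) = f \<and> cComp L (cId L (cCod L f)) f = f"
  and F: "is_functor K L F"
  and faithful: "\<And>f f'. f\<in>cArr K \<Longrightarrow> f'\<in>cArr K \<Longrightarrow> cDom K f = cDom K f' \<Longrightarrow> cCod K f = cCod K f'
        \<Longrightarrow> snd F f = snd F f' \<Longrightarrow> f = f'"
  and full: "\<And>x y g. x\<in>cObj K \<Longrightarrow> y\<in>cObj K \<Longrightarrow> g\<in>cArr L \<Longrightarrow> cDom L g = fst F x \<Longrightarrow> cCod L g = fst F y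
        \<Longrightarrow> \<exists>f\<in>cArr K. cDom K f = x \<and> cCod K f = y \<and> snd F f = g"
  and sec: "\<And>y. y\<in>cObj L \<Longrightarrow> Go y \<in> cObj K \<and> fst F (Go y) = y"
  shows "equivalence_of_categories K L F"
proof -
  have Fo: "\<And>x. x\<in>cObj K \<Longrightarrow> fst F x \<in> cObj L" using F unfolding is_functor_def by blast
  have Fa: "\<And>f. f\<in>cArr K \<Longrightarrow> snd F f \<in> cArr L \<and> cDom L (snd F f) = fst F (cDom K f)
                  \<and> cCod L (snd F f) = fst F (cCod K f)" using F unfolding is_functor_def by blast
  have Fi: "\<And>x. x\<in>cObj K \<Longrightarrow> snd F (cId K x) = cId L (fst F x)" using F unfolding is_functor_def by blast
  have Fc: "\<And>f g. f\<in>cArr K \<Longrightarrow> g\<in>cArr K \<Longrightarrow> cCod K f = cDom K g \<Longrightarrow>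
        snd F (cComp K g f) = cComp L (snd F g) (snd F f)" using F unfolding is_functor_def by blast
  define P where "P x y g f \<longleftrightarrow> f \<in> cArr K \<and> cDom K f = x \<and> cCod K f = y \<and> snd F f = g" for x y g f
  define lift where "lift x y g = (THE f. P x y g f)" for x y g
  have lift: "P x y g (lift x y g)" if a: "x\<in>cObj K" "y\<in>cObj K" "g\<in>cArr L" "cDom L g = fst F x" "cCod L g = fst F y" for x y g
  proof -
    obtain f where "P x y g f" using full[of x y g] a unfolding P_def by blast
    moreover have "P x y g f' \<Longrightarrow> f' = f" for f' using faithful \<open>P x y g f\<close> unfolding P_def by metis
    ultimately show ?thesis unfolding lift_def by (rule theI)
  qed
  have liftu: "lift x y g = f" if "x\<in>cObj K" "y\<in>cObj K" "g\<in>cArr L" "cDom L g = fst F x" "cCod L g = fst F y" "P x y g f" for x y g f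
    using lift[OF that(1-5)] that(6) faithful unfolding P_def by metis
  define G where "G = (Go, \<lambda>g. lift (Go (cDom L g)) (Go (cCod L g)) g)"
  have Garr: "snd G g \<in> cArr K \<and> cDom K (snd G g) = fst G (cDom L g) \<and> cCod K (snd G g) = fst G (cCod L g)
     \<and> snd F (snd G g) = g" if "g \<in> cArr L" for g
    using lift[of "Go (cDom L g)" "Go (cCod L g)" g] sec L_dc that unfolding G_def P_def by auto
  have g1: "fst G x \<in> cObj K" if "x \<in> cObj L" for x using sec that unfolding G_def by auto
  have g3: "snd G (cId L x) = cId K (fst G x)" if "x \<in> cObj L" for x
    proof -
      have "snd G (cId L x) = lift (Go x) (Go x) (cId L x)" using L_id that unfolding G_def by simp
      also have "\<dots> = cId K (Go x)"
        apply (rule liftu) using sec that L_id K_id Fi unfolding P_def by auto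
      finally show ?thesis unfolding G_def by simp
    qed
  have g4: "snd G (cComp L g f) = cComp K (snd G g) (snd G f)" if "f \<in> cArr L" "g \<in> cArr L" "cCod L f = cDom L g" for f g
    proof -
      note a = Garr[OF that(1)] Garr[OF that(2)]
      have c: "cComp K (snd G g) (snd G f) \<in> cArr K \<and> cDom K (cComp K (snd G g) (snd G f)) = Go (cDom L f)
        \<and> cCod K (cComp K (snd G g) (snd G f)) = Go (cCod L g)"
        using K_comp[of "snd G f" "snd G g"] a that unfolding G_def by auto
      have d: "snd F (cComp K (snd G g) (snd G f)) = cComp L g f"
        using Fc[of "snd G f" "snd G g"] a that unfolding G_def by auto
      have "snd G (cComp L g f) = lift (Go (cDom L (cComp L g f))) (Go (cCod L (cComp L g f))) (cComp L g f)"
        unfolding G_def by simp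
      moreover have "P (Go (cDom L f)) (Go (cCod L g)) (cComp L g f) (cComp K (snd G g) (snd G f))"
        using c d unfolding P_def by auto
      moreover have "cComp L g f \<in> cArr L \<and> cDom L (cComp L g f) = cDom L f \<and> cCod L (cComp L g f) = cCod L g"
        using L_comp that by blast
      moreover have "Go (cDom L f) \<in> cObj K \<and> fst F (Go (cDom L f)) = cDom L f" using sec L_dc that by blast
      moreover have "Go (cCod L g) \<in> cObj K \<and> fst F (Go (cCod L g)) = cCod L g" using sec L_dc that by blast
      ultimately show ?thesis using liftu by metis
    qed
  have GF: "is_functor L K G"
    unfolding is_functor_def using g1 Garr g3 g4 by blast
  define eta where "eta x = lift x (Go (fst F x)) (cId L (fst F x))" for x
  define etai where "etai x = lift (Go (fst F x)) x (cId L (fst F x))" for x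
  have eta: "P x (Go (fst F x)) (cId L (fst F x)) (eta x)" if "x \<in> cObj K" for x
    unfolding eta_def apply (rule lift) using that Fo sec L_id by auto
  have etai: "P (Go (fst F x)) x (cId L (fst F x)) (etai x)" if "x \<in> cObj K" for x
    unfolding etai_def apply (rule lift) using that Fo sec L_id by auto
  have n1: "eta x \<in> cArr K \<and> cDom K (eta x) = fst fid x \<and> cCod K (eta x) = fst (fcomp G F) x"
    if x: "x \<in> cObj K" for x
      using eta[OF x] unfolding P_def fid_def fcomp_def G_def by auto
  have n2: "cat_iso K (eta x)" if x: "x \<in> cObj K" for x
  proof -
      have Fx: "fst F x \<in> cObj L" using Fo x by auto
      have Gx: "Go (fst F x) \<in> cObj K" using sec Fx by auto
      have A: "cComp K (etai x) (eta x) = cId K x"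
          apply (rule faithful)
          using eta[OF x] etai[OF x] K_comp[of "eta x" "etai x"] K_id[OF x] Fc[of "eta x" "etai x"] Fi[OF x]
            L_unit[of "cId L (fst F x)"] L_id[OF Fx] unfolding P_def by auto
      have B: "cComp K (eta x) (etai x) = cId K (Go (fst F x))"
          apply (rule faithful)
          using eta[OF x] etai[OF x] K_comp[of "etai x" "eta x"] K_id[OF Gx] Fc[of "etai x" "eta x"] Fi[OF Gx]
            L_unit[of "cId L (fst F x)"] L_id[OF Fx] sec[OF Fx] unfolding P_def by auto
      show ?thesis unfolding cat_iso_def using A B eta[OF x] etai[OF x] unfolding P_def by auto
  qed
  have n3: "cComp K (eta (cCod K f)) (snd fid f) = cComp K (snd (fcomp G F) f) (eta (cDom K f))"
    if f: "f \<in> cArr K" for f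
  proof -
    have x: "cDom K f \<in> cObj K" and y: "cCod K f \<in> cObj K" using K_dc f by auto
    have Fx: "fst F (cDom K f) \<in> cObj L" "fst F (cCod K f) \<in> cObj L" using Fo x y by auto
    note ex = eta[OF x] and ey = eta[OF y]
    have Gf: "snd G (snd F f) \<in> cArr K \<and> cDom K (snd G (snd F f)) = Go (fst F (cDom K f))
       \<and> cCod K (snd G (snd F f)) = Go (fst F (cCod K f)) \<and> snd F (snd G (snd F f)) = snd F f"
      using Garr[of "snd F f"] Fa[OF f] unfolding G_def by auto
    have "cComp K (eta (cCod K f)) f = cComp K (snd G (snd F f)) (eta (cDom K f))"
      apply (rule faithful)
      using ex ey Gf f K_comp[of f "eta (cCod K f)"] K_comp[of "eta (cDom K f)" "snd G (snd F f)"]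
        Fc[of f "eta (cCod K f)"] Fc[of "eta (cDom K f)" "snd G (snd F f)"] L_unit[of "snd F f"] Fa[OF f]
      unfolding P_def by auto
    then show ?thesis
      unfolding fid_def fcomp_def by simp
  qed
  have N1: "is_nat_iso K K fid (fcomp G F) eta"
    unfolding is_nat_iso_def is_nat_trans_def using n1 n2 n3 by blast
  have m1: "cId L y \<in> cArr L \<and> cDom L (cId L y) = fst (fcomp F G) y \<and> cCod L (cId L y) = fst fid y"
     "cat_iso L (cId L y)" if y: "y \<in> cObj L" for y
    using L_id[OF y] sec[OF y] L_unit[of "cId L y"] unfolding fcomp_def fid_def G_def cat_iso_def by auto
  have m2: "cComp L (cId L (cCod L g)) (snd (fcomp F G) g) = cComp L (snd fid g) (cId L (cDom L g))"
    if g: "g \<in> cArr L" for g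
      using Garr[OF g] L_unit[OF g] unfolding fcomp_def fid_def by auto
  have N2: "is_nat_iso L L (fcomp F G) fid (cId L)"
    unfolding is_nat_iso_def is_nat_trans_def using m1 m2 by blast
  show ?thesis unfolding equivalence_of_categories_def using F GF N1 N2 by blast
qed




locale isq =
  fixes C :: "('o, 'h, 'v) dblcat" and Z :: 'o and s w
  assumes iso: "isostable C Z"
  and s_fun: "is_functor (FunSpan C) (FunSq C) s"
  and s_obj: "\<forall>X\<in>cObj (FunSpan C). fst istar (fst s X) = X"
  and s_arr: "\<forall>\<phi>\<in>cArr (FunSpan C). snd istar (snd s \<phi>) = \<phi>"
  and w_nat: "is_nat_trans (FunSq C) (FunSq C) (fcomp s istar) fid w"
  and w_comp: "\<forall>X\<in>cObj (FunSq C).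
              compA (w X) = vId C (cornerA C X) \<and>
              compB (w X) = vId C (cornerB C X) \<and>
              compC (w X) = vId C (cornerC C X)"
begin

lemma stab: "stable C Z" using iso unfolding isostable_def by blast
lemma sqc: "squares_category C Z" using stab unfolding stable_def by blast
lemma flat: "flat_double_category C" using sqc unfolding squares_category_def by blast
lemma Zobj: "Z \<in> dObj C" using sqc unfolding squares_category_def by blast

lemma VC: "is_category (Vcat C)" using flat unfolding flat_double_category_def by blast
lemma HC: "is_category (Hcat C)" using flat unfolding flat_double_category_def by blast

lemma vid: "x \<in> dObj C \<Longrightarrow> vId C x \<in> vArr C \<and> vDom C (vId C x) = x \<and> vCod C (vId C x) = x"
  using VC unfolding is_category_def Vcat_def by auto
lemma vdc: "f \<in> vArr C \<Longrightarrow> vDom C f \<in> dObj C \<and> vCod C f \<in> dObj C"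
  using VC unfolding is_category_def Vcat_def by auto
lemma vcomp: "f \<in> vArr C \<Longrightarrow> g \<in> vArr C \<Longrightarrow> vCod C f = vDom C g \<Longrightarrow>
   vComp C g f \<in> vArr C \<and> vDom C (vComp C g f) = vDom C f \<and> vCod C (vComp C g f) = vCod C g"
  using VC unfolding is_category_def Vcat_def by auto
lemma vidr: "f \<in> vArr C \<Longrightarrow> vComp C f (vId C (vDom C f)) = f"
  using VC unfolding is_category_def Vcat_def by auto
lemma vidl: "f \<in> vArr C \<Longrightarrow> vComp C (vId C (vCod C f)) f = f"
  using VC unfolding is_category_def Vcat_def by auto
lemma vassoc: "f \<in> vArr C \<Longrightarrow> g \<in> vArr C \<Longrightarrow> h \<in> vArr C \<Longrightarrow> vCod C f = vDom C g \<Longrightarrow> vCod C g = vDom C h \<Longrightarrow>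
   vComp C h (vComp C g f) = vComp C (vComp C h g) f"
  using VC unfolding is_category_def Vcat_def by auto

lemma hid: "x \<in> dObj C \<Longrightarrow> hId C x \<in> hArr C \<and> hDom C (hId C x) = x \<and> hCod C (hId C x) = x"
  using HC unfolding is_category_def Hcat_def by auto
lemma hdc: "f \<in> hArr C \<Longrightarrow> hDom C f \<in> dObj C \<and> hCod C f \<in> dObj C"
  using HC unfolding is_category_def Hcat_def by auto
lemma hcomp: "f \<in> hArr C \<Longrightarrow> g \<in> hArr C \<Longrightarrow> hCod C f = hDom C g \<Longrightarrow>
   hComp C g f \<in> hArr C \<and> hDom C (hComp C g f) = hDom C f \<and> hCod C (hComp C g f) = hCod C g"
  using HC unfolding is_category_def Hcat_def by auto

lemma sq_typ: "Sq C f g h k \<Longrightarrow>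
        f \<in> hArr C \<and> k \<in> hArr C \<and> g \<in> vArr C \<and> h \<in> vArr C \<and>
        hDom C f = vDom C g \<and> hCod C f = vDom C h \<and>
        hDom C k = vCod C g \<and> hCod C k = vCod C h"
  using flat unfolding flat_double_category_def by blast
lemma sq_hid: "f \<in> hArr C \<Longrightarrow> Sq C f (vId C (hDom C f)) (vId C (hCod C f)) f"
  using flat unfolding flat_double_category_def by blast
lemma sq_hpaste: "Sq C f g h k \<Longrightarrow> Sq C f' h h' k' \<Longrightarrow> Sq C (hComp C f' f) g h' (hComp C k' k)"
  using flat unfolding flat_double_category_def by blast
lemma sq_vpaste: "Sq C f g h k \<Longrightarrow> Sq C k g' h' k' \<Longrightarrow> Sq C f (vComp C g' g) (vComp C h' h) k'"
  using flat unfolding flat_double_category_def by blast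

lemma hinit_ex1: "A \<in> dObj C \<Longrightarrow> \<exists>!h. h \<in> hArr C \<and> hDom C h = Z \<and> hCod C h = A"
  using sqc unfolding squares_category_def by blast
lemma vterm_ex1: "A \<in> dObj C \<Longrightarrow> \<exists>!v. v \<in> vArr C \<and> vDom C v = A \<and> vCod C v = Z"
  using sqc unfolding squares_category_def by blast
lemma hinit: "A \<in> dObj C \<Longrightarrow> hinit C Z A \<in> hArr C \<and> hDom C (hinit C Z A) = Z \<and> hCod C (hinit C Z A) = A"
  unfolding hinit_def using theI'[OF hinit_ex1] by blast
lemma hinit_u: "h \<in> hArr C \<Longrightarrow> hDom C h = Z \<Longrightarrow> h = hinit C Z (hCod C h)"
  using hinit hinit_ex1 hdc by metis
lemma vterm: "A \<in> dObj C \<Longrightarrow> vterm C Z A \<in> vArr C \<and> vDom C (vterm C Z A) = A \<and> vCod C (vterm C Z A) = Z"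
  unfolding vterm_def using theI'[OF vterm_ex1] by blast
lemma vterm_u: "v \<in> vArr C \<Longrightarrow> vCod C v = Z \<Longrightarrow> v = vterm C Z (vDom C v)"
  using vterm vterm_ex1 vdc by metis
lemma vterm_eq: "v \<in> vArr C \<Longrightarrow> vCod C v = Z \<Longrightarrow> v' \<in> vArr C \<Longrightarrow> vCod C v' = Z \<Longrightarrow> vDom C v = vDom C v' \<Longrightarrow> v = v'"
  using vterm_u by metis

lemma vweq_iso: "vweq C Z f \<Longrightarrow> \<exists>f'. f' \<in> vArr C \<and> vDom C f' = vCod C f \<and> vCod C f' = vDom C f \<and>
   vComp C f' f = vId C (vDom C f) \<and> vComp C f f' = vId C (vCod C f)"
  using iso unfolding isostable_def cat_iso_def Vcat_def by auto

lemma flip: "Sq C f g h k \<Longrightarrow>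
        g' \<in> vArr C \<Longrightarrow> vDom C g' = vCod C g \<Longrightarrow> vCod C g' = vDom C g \<Longrightarrow>
        vComp C g' g = vId C (vDom C g) \<Longrightarrow> vComp C g g' = vId C (vCod C g) \<Longrightarrow>
        h' \<in> vArr C \<Longrightarrow> vDom C h' = vCod C h \<Longrightarrow> vCod C h' = vDom C h \<Longrightarrow>
        vComp C h' h = vId C (vDom C h) \<Longrightarrow> vComp C h h' = vId C (vCod C h) \<Longrightarrow>
        Sq C k g' h' f"
proof -
  assume a: "Sq C f g h k"
  note t = sq_typ[OF a]
  have fl: "\<forall>f k g h g' h'.
        f \<in> hArr C \<longrightarrow> k \<in> hArr C \<longrightarrow> g \<in> vArr C \<longrightarrow> h \<in> vArr C \<longrightarrow>
        vDom C g = hDom C f \<longrightarrow> vCod C g = hDom C k \<longrightarrow>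
        vDom C h = hCod C f \<longrightarrow> vCod C h = hCod C k \<longrightarrow>
        g' \<in> vArr C \<longrightarrow> vDom C g' = vCod C g \<longrightarrow> vCod C g' = vDom C g \<longrightarrow>
        vComp C g' g = vId C (vDom C g) \<longrightarrow> vComp C g g' = vId C (vCod C g) \<longrightarrow>
        h' \<in> vArr C \<longrightarrow> vDom C h' = vCod C h \<longrightarrow> vCod C h' = vDom C h \<longrightarrow>
        vComp C h' h = vId C (vDom C h) \<longrightarrow> vComp C h h' = vId C (vCod C h) \<longrightarrow>
        (Sq C f g h k \<longleftrightarrow> Sq C k g' h' f)" using iso unfolding isostable_def by blast
  show "g' \<in> vArr C \<Longrightarrow> vDom C g' = vCod C g \<Longrightarrow> vCod C g' = vDom C g \<Longrightarrow>
        vComp C g' g = vId C (vDom C g) \<Longrightarrow> vComp C g g' = vId C (vCod C g) \<Longrightarrow>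
        h' \<in> vArr C \<Longrightarrow> vDom C h' = vCod C h \<Longrightarrow> vCod C h' = vDom C h \<Longrightarrow>
        vComp C h' h = vId C (vDom C h) \<Longrightarrow> vComp C h h' = vId C (vCod C h) \<Longrightarrow>
        Sq C k g' h' f"
    using fl[rule_format, of f k g h g' h'] t a by simp
qed

lemma vweq_id: "A \<in> dObj C \<Longrightarrow> vweq C Z (vId C A)"
  unfolding vweq_def using vid[of A] vid[OF Zobj] sq_hid[of "hinit C Z A"] hinit[of A] by auto

lemma vweq_paste: assumes "vweq C Z g" "Sq C f g h k" shows "vweq C Z h"
proof -
  have a: "Sq C (hinit C Z (vDom C g)) (vId C Z) g (hinit C Z (vCod C g))" using assms(1) unfolding vweq_def by blast
  note t = sq_typ[OF assms(2)] sq_typ[OF a]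
  have "Sq C (hComp C f (hinit C Z (vDom C g))) (vId C Z) h (hComp C k (hinit C Z (vCod C g)))"
    using sq_hpaste[OF a assms(2)] .
  moreover have "hComp C f (hinit C Z (vDom C g)) = hinit C Z (vDom C h)"
    using hcomp[of "hinit C Z (vDom C g)" f] t hinit_u vdc hinit by metis
  moreover have "hComp C k (hinit C Z (vCod C g)) = hinit C Z (vCod C h)"
    using hcomp[of "hinit C Z (vCod C g)" k] t hinit_u vdc hinit by metis
  ultimately show ?thesis unfolding vweq_def using t by auto
qed

lemma vweq_comp: assumes "vweq C Z f" "vweq C Z g" "vCod C f = vDom C g" shows "vweq C Z (vComp C g f)"
proof -
  have a: "Sq C (hinit C Z (vDom C f)) (vId C Z) f (hinit C Z (vCod C f))" using assms(1) unfolding vweq_def by blast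
  have b: "Sq C (hinit C Z (vDom C g)) (vId C Z) g (hinit C Z (vCod C g))" using assms(2) unfolding vweq_def by blast
  have "Sq C (hinit C Z (vDom C f)) (vComp C (vId C Z) (vId C Z)) (vComp C g f) (hinit C Z (vCod C g))"
    using sq_vpaste[OF a] b assms(3) by simp
  moreover have "vComp C (vId C Z) (vId C Z) = vId C Z" using vidl vid Zobj by metis
  ultimately show ?thesis unfolding vweq_def using vcomp assms sq_typ a b by (metis vweq_def)
qed


lemma spanObjI: "f \<in> hArr C \<Longrightarrow> g \<in> vArr C \<Longrightarrow> hDom C f = vDom C g \<Longrightarrow> (f, g) \<in> cObj (FunSpan C)"
  unfolding FunSpan_def spanObj_def by simp

lemma s_sq: assumes "f \<in> hArr C" "g \<in> vArr C" "hDom C f = vDom C g"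
  shows "\<exists>h k. fst s (f, g) = (f, g, h, k) \<and> Sq C f g h k"
proof -
  have X: "(f, g) \<in> cObj (FunSpan C)" using spanObjI assms .
  have "fst s (f, g) \<in> cObj (FunSq C)" using s_fun X unfolding is_functor_def by blast
  then obtain a b h k where e: "fst s (f, g) = (a, b, h, k)" and q: "Sq C a b h k"
    unfolding FunSq_def sqObj_def by auto
  have "fst istar (fst s (f, g)) = (f, g)" using s_obj X by blast
  then have "a = f" "b = g" using e unfolding istar_def istar_o_def by auto
  then show ?thesis using e q by blast
qed

lemma s_mor: assumes "((f, g), (f', g'), (ta, tb, tc)) \<in> cArr (FunSpan C)"
  shows "\<exists>td. snd s ((f, g), (f', g'), (ta, tb, tc)) = (fst s (f, g), fst s (f', g'), (ta, tb, tc, td))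
     \<and> sqMor C (fst s (f, g)) (fst s (f', g')) (ta, tb, tc, td)"
proof -
  have "snd s ((f, g), (f', g'), (ta, tb, tc)) \<in> cArr (FunSq C) \<and>
     cDom (FunSq C) (snd s ((f, g), (f', g'), (ta, tb, tc))) = fst s (cDom (FunSpan C) ((f, g), (f', g'), (ta, tb, tc))) \<and>
     cCod (FunSq C) (snd s ((f, g), (f', g'), (ta, tb, tc))) = fst s (cCod (FunSpan C) ((f, g), (f', g'), (ta, tb, tc)))"
    using s_fun assms unfolding is_functor_def by blast
  then obtain X Y a b c d where e: "snd s ((f, g), (f', g'), (ta, tb, tc)) = (X, Y, (a, b, c, d))"
    and m: "sqMor C X Y (a, b, c, d)" and X: "X = fst s (f, g)" and Y: "Y = fst s (f', g')"
    unfolding FunSq_def FunSpan_def by auto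
  have "snd istar (snd s ((f, g), (f', g'), (ta, tb, tc))) = ((f, g), (f', g'), (ta, tb, tc))"
    using s_arr assms by blast
  then have "a = ta" "b = tb" "c = tc" using e unfolding istar_def by auto
  then show ?thesis using e m X Y by blast
qed

lemma sqObjI: "Sq C f g h k \<Longrightarrow> (f, g, h, k) \<in> cObj (FunSq C)"
  unfolding FunSq_def sqObj_def by simp

lemma w_X: assumes "Sq C f g h k"
  shows "\<exists>d. w (f, g, h, k) = (fst s (f, g), (f, g, h, k), (vId C (hDom C f), vId C (hCod C f), vId C (hDom C k), d))
     \<and> sqMor C (fst s (f, g)) (f, g, h, k) (vId C (hDom C f), vId C (hCod C f), vId C (hDom C k), d)"
proof -
  have X: "(f, g, h, k) \<in> cObj (FunSq C)" using sqObjI assms .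
  note nt = bspec[OF conjunct1[OF w_nat[unfolded is_nat_trans_def]] X]
  have "w (f, g, h, k) \<in> cArr (FunSq C) \<and> cDom (FunSq C) (w (f, g, h, k)) = fst s (f, g)
     \<and> cCod (FunSq C) (w (f, g, h, k)) = (f, g, h, k)"
    using nt by (simp add: fcomp_def fid_def istar_def istar_o_def)
  then obtain X1 Y1 a b c d where e: "w (f, g, h, k) = (X1, Y1, (a, b, c, d))"
    and m: "sqMor C X1 Y1 (a, b, c, d)" and X1: "X1 = fst s (f, g)" and Y1: "Y1 = (f, g, h, k)"
    unfolding FunSq_def fcomp_def fid_def istar_def istar_o_def by auto
  have "compA (w (f, g, h, k)) = vId C (cornerA C (f, g, h, k)) \<and>
              compB (w (f, g, h, k)) = vId C (cornerB C (f, g, h, k)) \<and>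
              compC (w (f, g, h, k)) = vId C (cornerC C (f, g, h, k))" using w_comp X by blast
  then have "a = vId C (hDom C f)" "b = vId C (hCod C f)" "c = vId C (hDom C k)"
    using e unfolding compA_def compB_def compC_def cornerA_def cornerB_def cornerC_def by auto
  then show ?thesis using e m X1 Y1 by blast
qed

lemma w_natD: assumes "((f, g, h, k), (f', g', h', k'), (ta, tb, tc, td)) \<in> cArr (FunSq C)"
    and "snd s ((f, g), (f', g'), (ta, tb, tc)) = (fst s (f, g), fst s (f', g'), (ta, tb, tc, e))"
    and "w (f, g, h, k) = (fst s (f, g), (f, g, h, k), (a1, b1, c1, dX))"
    and "w (f', g', h', k') = (fst s (f', g'), (f', g', h', k'), (a2, b2, c2, dY))"
  shows "vComp C dY e = vComp C td dX"
proof -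
  note nt = bspec[OF conjunct2[OF w_nat[unfolded is_nat_trans_def]] assms(1)]
  then show ?thesis using assms(2-4) unfolding FunSq_def fcomp_def fid_def istar_def istar_o_def by simp
qed

lemma w_X': assumes q: "Sq C f g h k"
  shows "\<exists>h0 k0 d. fst s (f, g) = (f, g, h0, k0) \<and> Sq C f g h0 k0 \<and>
    w (f, g, h, k) = ((f, g, h0, k0), (f, g, h, k), (vId C (hDom C f), vId C (hCod C f), vId C (hDom C k), d)) \<and>
    vweq C Z d \<and> d \<in> vArr C \<and> vDom C d = hCod C k0 \<and> vCod C d = hCod C k \<and>
    Sq C k0 (vId C (hDom C k)) d k \<and> vComp C d h0 = h"
proof -
  note t = sq_typ[OF q]
  obtain h0 k0 where e: "fst s (f, g) = (f, g, h0, k0)" and q0: "Sq C f g h0 k0" using s_sq t by blast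
  note t0 = sq_typ[OF q0]
  obtain d where we: "w (f, g, h, k) = (fst s (f, g), (f, g, h, k), (vId C (hDom C f), vId C (hCod C f), vId C (hDom C k), d))"
    and m: "sqMor C (fst s (f, g)) (f, g, h, k) (vId C (hDom C f), vId C (hCod C f), vId C (hDom C k), d)"
    using w_X[OF q] by blast
  have m': "d \<in> vArr C" "vDom C d = hCod C k0" "vCod C d = hCod C k" "Sq C k0 (vId C (hDom C k)) d k"
     "vComp C d h0 = vComp C h (vId C (hCod C f))" using m unfolding e sqMor_def by auto
  have "vComp C h (vId C (hCod C f)) = h" using vidr t by metis
  moreover have "vweq C Z d" using vweq_paste[OF vweq_id m'(4)] t hdc by metis
  ultimately show ?thesis using e q0 we m' by auto
qed

lemma spanMor_of_sqMor: assumes "Sq C f g h k" "Sq C f' g' h' k'" "sqMor C (f, g, h, k) (f', g', h', k') (ta, tb, tc, td)"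
  shows "((f, g), (f', g'), (ta, tb, tc)) \<in> cArr (FunSpan C)"
  using assms sq_typ[OF assms(1)] sq_typ[OF assms(2)] unfolding FunSpan_def spanObj_def spanMor_def sqMor_def by auto

lemma sqMor_arr: assumes "Sq C f g h k" "Sq C f' g' h' k'" "sqMor C (f, g, h, k) (f', g', h', k') t"
  shows "((f, g, h, k), (f', g', h', k'), t) \<in> cArr (FunSq C)"
  using assms unfolding FunSq_def sqObj_def by auto

lemma cell_faithful: assumes q1: "Sq C f g h k" and q2: "Sq C f' g' h' k'"
  and m1: "sqMor C (f, g, h, k) (f', g', h', k') (ta, tb, tc, td)"
  and m2: "sqMor C (f, g, h, k) (f', g', h', k') (ta, tb, tc, td')"
  shows "td = td'"
proof -
  have sp: "((f, g), (f', g'), (ta, tb, tc)) \<in> cArr (FunSpan C)" using spanMor_of_sqMor[OF q1 q2 m1] .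
  obtain e where se: "snd s ((f, g), (f', g'), (ta, tb, tc)) = (fst s (f, g), fst s (f', g'), (ta, tb, tc, e))"
    using s_mor[OF sp] by blast
  obtain h0 k0 dX where wX: "w (f, g, h, k) = ((f, g, h0, k0), (f, g, h, k), (vId C (hDom C f), vId C (hCod C f), vId C (hDom C k), dX))"
    and sX: "fst s (f, g) = (f, g, h0, k0)" and dX: "vweq C Z dX" "dX \<in> vArr C" "vCod C dX = hCod C k"
    using w_X'[OF q1] by blast
  obtain h1 k1 dY where wY: "w (f', g', h', k') = ((f', g', h1, k1), (f', g', h', k'), (vId C (hDom C f'), vId C (hCod C f'), vId C (hDom C k'), dY))"
    and sY: "fst s (f', g') = (f', g', h1, k1)"
    using w_X'[OF q2] by blast
  have n1: "vComp C dY e = vComp C td dX"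
    using w_natD[OF sqMor_arr[OF q1 q2 m1] se] wX wY sX sY by simp
  have n2: "vComp C dY e = vComp C td' dX"
    using w_natD[OF sqMor_arr[OF q1 q2 m2] se] wX wY sX sY by simp
  obtain dXi where i: "dXi \<in> vArr C" "vDom C dXi = vCod C dX" "vCod C dXi = vDom C dX"
     "vComp C dX dXi = vId C (vCod C dX)" using vweq_iso[OF dX(1)] by blast
  have td: "td \<in> vArr C" "vDom C td = hCod C k" using m1 unfolding sqMor_def by auto
  have td': "td' \<in> vArr C" "vDom C td' = hCod C k" using m2 unfolding sqMor_def by auto
  have "td = vComp C td (vComp C dX dXi)" using i vidr td dX by metis
  also have "\<dots> = vComp C (vComp C td dX) dXi" using vassoc i td dX by metis
  also have "\<dots> = vComp C (vComp C td' dX) dXi" using n1 n2 by simp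
  also have "\<dots> = vComp C td' (vComp C dX dXi)" using vassoc i td' dX by metis
  also have "\<dots> = td'" using i vidr td' dX by metis
  finally show ?thesis .
qed

lemma cell_full: assumes q1: "Sq C f g h k" and q2: "Sq C f' g' h' k'"
  and sp: "((f, g), (f', g'), (ta, tb, tc)) \<in> cArr (FunSpan C)"
  shows "\<exists>td. sqMor C (f, g, h, k) (f', g', h', k') (ta, tb, tc, td)"
proof -
  note t1 = sq_typ[OF q1] and t2 = sq_typ[OF q2]
  have spm: "ta \<in> vArr C \<and> vDom C ta = hDom C f \<and> vCod C ta = hDom C f' \<and>
     tb \<in> vArr C \<and> vDom C tb = hCod C f \<and> vCod C tb = hCod C f' \<and>
     tc \<in> vArr C \<and> vDom C tc = vCod C g \<and> vCod C tc = vCod C g' \<and>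
     Sq C f ta tb f' \<and> vComp C tc g = vComp C g' ta" using sp unfolding FunSpan_def spanMor_def by auto
  obtain e where se: "snd s ((f, g), (f', g'), (ta, tb, tc)) = (fst s (f, g), fst s (f', g'), (ta, tb, tc, e))"
    and me: "sqMor C (fst s (f, g)) (fst s (f', g')) (ta, tb, tc, e)"
    using s_mor[OF sp] by blast
  obtain h0 k0 dX where sX: "fst s (f, g) = (f, g, h0, k0)" and q0: "Sq C f g h0 k0"
    and dX: "vweq C Z dX" "dX \<in> vArr C" "vDom C dX = hCod C k0" "vCod C dX = hCod C k"
     "Sq C k0 (vId C (hDom C k)) dX k" "vComp C dX h0 = h"
    using w_X'[OF q1] by blast
  obtain h1 k1 dY where sY: "fst s (f', g') = (f', g', h1, k1)" and q1': "Sq C f' g' h1 k1"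
    and dY: "vweq C Z dY" "dY \<in> vArr C" "vDom C dY = hCod C k1" "vCod C dY = hCod C k'"
     "Sq C k1 (vId C (hDom C k')) dY k'" "vComp C dY h1 = h'"
    using w_X'[OF q2] by blast
  note t0 = sq_typ[OF q0] and t1' = sq_typ[OF q1']
  have em: "e \<in> vArr C" "vDom C e = hCod C k0" "vCod C e = hCod C k1" "Sq C k0 tc e k1"
    "vComp C e h0 = vComp C h1 tb" using me unfolding sX sY sqMor_def by auto
  obtain dXi where i: "dXi \<in> vArr C" "vDom C dXi = vCod C dX" "vCod C dXi = vDom C dX"
     "vComp C dXi dX = vId C (vDom C dX)" "vComp C dX dXi = vId C (vCod C dX)" using vweq_iso[OF dX(1)] by blast
  have c: "hDom C k \<in> dObj C" "hDom C k' \<in> dObj C" using hdc t1 t2 by blast+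
  have idc: "vId C (hDom C k) \<in> vArr C" "vDom C (vId C (hDom C k)) = hDom C k" "vCod C (vId C (hDom C k)) = hDom C k"
    "vComp C (vId C (hDom C k)) (vId C (hDom C k)) = vId C (hDom C k)"
    using vid[OF c(1)] vidl[of "vId C (hDom C k)"] by auto
  have fl: "Sq C k (vId C (hDom C k)) dXi k0"
    apply (rule flip[OF dX(5)]) using idc i dX by auto
  have p1: "Sq C k (vComp C tc (vId C (hDom C k))) (vComp C e dXi) k1" using sq_vpaste[OF fl em(4)] .
  have p2: "Sq C k (vComp C (vId C (hDom C k')) (vComp C tc (vId C (hDom C k)))) (vComp C dY (vComp C e dXi)) k'"
    using sq_vpaste[OF p1 dY(5)] .
  have tceq: "vComp C (vId C (hDom C k')) (vComp C tc (vId C (hDom C k))) = tc"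
    using spm t1 t2 vidl vidr by metis
  have a1: "vComp C dXi h = h0"
  proof -
    have "vComp C dXi h = vComp C dXi (vComp C dX h0)" using dX by simp
    also have "\<dots> = vComp C (vComp C dXi dX) h0" using vassoc i dX t0 by metis
    also have "\<dots> = h0" using i vidl t0 dX by metis
    finally show ?thesis .
  qed
  define td where "td = vComp C dY (vComp C e dXi)"
  have eXi: "vComp C e dXi \<in> vArr C \<and> vDom C (vComp C e dXi) = hCod C k \<and> vCod C (vComp C e dXi) = hCod C k1"
    using vcomp[of dXi e] i em dX by auto
  have tdt: "td \<in> vArr C \<and> vDom C td = hCod C k \<and> vCod C td = hCod C k'"
    using vcomp[of "vComp C e dXi" dY] eXi dY unfolding td_def by auto
  have comm: "vComp C td h = vComp C h' tb"
  proof -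
    have "vComp C td h = vComp C dY (vComp C (vComp C e dXi) h)"
      unfolding td_def using vassoc eXi dY t1 by metis
    also have "vComp C (vComp C e dXi) h = vComp C e (vComp C dXi h)"
      using vassoc em i dX t1 by metis
    also have "\<dots> = vComp C h1 tb" using a1 em by simp
    also have "vComp C dY (vComp C h1 tb) = vComp C (vComp C dY h1) tb"
      using vassoc dY t1' spm by metis
    also have "\<dots> = vComp C h' tb" using dY by simp
    finally show ?thesis .
  qed
  have "sqMor C (f, g, h, k) (f', g', h', k') (ta, tb, tc, td)"
    unfolding sqMor_def using spm t1 t2 tdt p2 tceq comm unfolding td_def by auto
  then show ?thesis by blast
qed

end



context isq begin

lemma smor_id: assumes X: "is_sobj C Z n X"
  shows "is_smor C Z n X X (\<lambda>j k. if j \<le> k \<and> k \<le> n then vId C (fst X j k) else undefined)"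
proof -
  obtain A Ah Av where e: "X = (A, Ah, Av)" by (cases X) auto
  have o: "\<And>j k. j \<le> k \<and> k \<le> n \<Longrightarrow> A j k \<in> dObj C" using X unfolding e is_sobj_def by auto
  have h: "\<And>j k. j \<le> k \<and> k < n \<Longrightarrow> Ah j k \<in> hArr C \<and> hDom C (Ah j k) = A j k \<and> hCod C (Ah j k) = A j (Suc k)"
    using X unfolding e is_sobj_def by auto
  have v: "\<And>j k. j < k \<and> k \<le> n \<Longrightarrow> Av j k \<in> vArr C \<and> vDom C (Av j k) = A j k \<and> vCod C (Av j k) = A (Suc j) k"
    using X unfolding e is_sobj_def by auto
  show ?thesis unfolding e is_smor_def
    apply (simp, intro conjI allI impI)
    subgoal using vid o by auto
    subgoal using vid o by auto
    subgoal using vid o by auto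
    subgoal using vweq_id o by auto
    subgoal for j k using sq_hid[of "Ah j k"] h[of j k] by auto
    subgoal for j k using v[of j k] vidl vidr by (metis Suc_leI le_less_trans less_imp_le_nat)
    done
qed

lemma smor_comp: assumes X: "is_sobj C Z n X" and Y: "is_sobj C Z n Y" and W: "is_sobj C Z n W"
  and p: "is_smor C Z n X Y \<phi>" and q: "is_smor C Z n Y W \<psi>"
  shows "is_smor C Z n X W (\<lambda>j k. if j \<le> k \<and> k \<le> n then vComp C (\<psi> j k) (\<phi> j k) else undefined)"
proof -
  obtain A Ah Av where e: "X = (A, Ah, Av)" by (cases X) auto
  obtain B Bh Bv where e2: "Y = (B, Bh, Bv)" by (cases Y) auto
  obtain D Dh Dv where e3: "W = (D, Dh, Dv)" by (cases W) auto
  have v: "\<And>j k. j < k \<and> k \<le> n \<Longrightarrow> Av j k \<in> vArr C \<and> vDom C (Av j k) = A j k \<and> vCod C (Av j k) = A (Suc j) k"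
    using X unfolding e is_sobj_def by auto
  have v2: "\<And>j k. j < k \<and> k \<le> n \<Longrightarrow> Bv j k \<in> vArr C \<and> vDom C (Bv j k) = B j k \<and> vCod C (Bv j k) = B (Suc j) k"
    using Y unfolding e2 is_sobj_def by auto
  have v3: "\<And>j k. j < k \<and> k \<le> n \<Longrightarrow> Dv j k \<in> vArr C \<and> vDom C (Dv j k) = D j k \<and> vCod C (Dv j k) = D (Suc j) k"
    using W unfolding e3 is_sobj_def by auto
  have p1: "\<And>j k. j \<le> k \<and> k \<le> n \<Longrightarrow>
        \<phi> j k \<in> vArr C \<and> vDom C (\<phi> j k) = A j k \<and> vCod C (\<phi> j k) = B j k \<and> vweq C Z (\<phi> j k)"
    and p2: "\<And>j k. j \<le> k \<and> k < n \<Longrightarrow> Sq C (Ah j k) (\<phi> j k) (\<phi> j (Suc k)) (Bh j k)"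
    and p3: "\<And>j k. j < k \<and> k \<le> n \<Longrightarrow> vComp C (\<phi> (Suc j) k) (Av j k) = vComp C (Bv j k) (\<phi> j k)"
    using p unfolding e e2 is_smor_def by auto
  have q1: "\<And>j k. j \<le> k \<and> k \<le> n \<Longrightarrow>
        \<psi> j k \<in> vArr C \<and> vDom C (\<psi> j k) = B j k \<and> vCod C (\<psi> j k) = D j k \<and> vweq C Z (\<psi> j k)"
    and q2: "\<And>j k. j \<le> k \<and> k < n \<Longrightarrow> Sq C (Bh j k) (\<psi> j k) (\<psi> j (Suc k)) (Dh j k)"
    and q3: "\<And>j k. j < k \<and> k \<le> n \<Longrightarrow> vComp C (\<psi> (Suc j) k) (Bv j k) = vComp C (Dv j k) (\<psi> j k)"
    using q unfolding e2 e3 is_smor_def by auto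
  have c3: "vComp C (vComp C (\<psi> (Suc j) k) (\<phi> (Suc j) k)) (Av j k) = vComp C (Dv j k) (vComp C (\<psi> j k) (\<phi> j k))"
    if jk: "j < k \<and> k \<le> n" for j k
  proof -
    have a: "Suc j \<le> k \<and> k \<le> n" "j \<le> k \<and> k \<le> n" using jk by auto
    note P = p1[OF a(1)] p1[OF a(2)] q1[OF a(1)] q1[OF a(2)] v[OF jk] v2[OF jk] v3[OF jk]
    have "vComp C (vComp C (\<psi> (Suc j) k) (\<phi> (Suc j) k)) (Av j k) = vComp C (\<psi> (Suc j) k) (vComp C (\<phi> (Suc j) k) (Av j k))"
      using vassoc P by metis
    also have "\<dots> = vComp C (\<psi> (Suc j) k) (vComp C (Bv j k) (\<phi> j k))" using p3 jk by simp
    also have "\<dots> = vComp C (vComp C (\<psi> (Suc j) k) (Bv j k)) (\<phi> j k)" using vassoc P by metis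
    also have "\<dots> = vComp C (vComp C (Dv j k) (\<psi> j k)) (\<phi> j k)" using q3 jk by simp
    also have "\<dots> = vComp C (Dv j k) (vComp C (\<psi> j k) (\<phi> j k))" using vassoc P by metis
    finally show ?thesis .
  qed
  show ?thesis unfolding e e3 is_smor_def
    apply (simp, intro conjI allI impI)
    subgoal for j k using vcomp[of "\<phi> j k" "\<psi> j k"] p1 q1 by auto
    subgoal for j k using vcomp[of "\<phi> j k" "\<psi> j k"] p1 q1 by auto
    subgoal for j k using vcomp[of "\<phi> j k" "\<psi> j k"] p1 q1 by auto
    subgoal for j k using vweq_comp[of "\<phi> j k" "\<psi> j k"] p1 q1 by auto
    subgoal for j k using sq_vpaste[OF p2[of j k] q2[of j k]] by auto
    subgoal for j k using c3 by auto
    done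
qed

lemma hmor_id: assumes X: "is_hobj C Z n X"
  shows "is_hmor C Z n X X (\<lambda>i. if i \<le> n then vId C (fst X i) else undefined)"
proof -
  obtain A a where e: "X = (A, a)" by (cases X) auto
  have o: "\<And>i. i \<le> n \<Longrightarrow> A i \<in> dObj C" and a: "\<And>i. i < n \<Longrightarrow> a i \<in> hArr C \<and> hDom C (a i) = A i \<and> hCod C (a i) = A (Suc i)"
    and A0: "A 0 = Z"
    using X unfolding e is_hobj_def by auto
  show ?thesis unfolding e is_hmor_def
    apply (simp add: A0, intro conjI allI impI)
    subgoal using vweq_id o by auto
    subgoal using vid o by auto
    subgoal using vid o by auto
    subgoal for i using sq_hid[of "a i"] a[of i] by auto
    done
qed

lemma hmor_comp: assumes X: "is_hobj C Z n X" and Y: "is_hobj C Z n Y" and W: "is_hobj C Z n W"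
  and p: "is_hmor C Z n X Y \<phi>" and q: "is_hmor C Z n Y W \<psi>"
  shows "is_hmor C Z n X W (\<lambda>i. if i \<le> n then vComp C (\<psi> i) (\<phi> i) else undefined)"
proof -
  obtain A a where e: "X = (A, a)" by (cases X) auto
  obtain B b where e2: "Y = (B, b)" by (cases Y) auto
  obtain D d where e3: "W = (D, d)" by (cases W) auto
  have p1: "\<And>i. i \<le> n \<Longrightarrow> vweq C Z (\<phi> i) \<and> vDom C (\<phi> i) = A i \<and> vCod C (\<phi> i) = B i"
    and p2: "\<phi> 0 = vId C Z" and p3: "\<And>i. i < n \<Longrightarrow> Sq C (a i) (\<phi> i) (\<phi> (Suc i)) (b i)"
    using p unfolding e e2 is_hmor_def by auto
  have q1: "\<And>i. i \<le> n \<Longrightarrow> vweq C Z (\<psi> i) \<and> vDom C (\<psi> i) = B i \<and> vCod C (\<psi> i) = D i"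
    and q2: "\<psi> 0 = vId C Z" and q3: "\<And>i. i < n \<Longrightarrow> Sq C (b i) (\<psi> i) (\<psi> (Suc i)) (d i)"
    using q unfolding e2 e3 is_hmor_def by auto
  show ?thesis unfolding e e3 is_hmor_def
    apply (simp, intro conjI allI impI)
    subgoal for i using vweq_comp[of "\<phi> i" "\<psi> i"] p1 q1 by auto
    subgoal for i using vcomp[of "\<phi> i" "\<psi> i"] p1 q1 by (auto simp: vweq_def)
    subgoal for i using vcomp[of "\<phi> i" "\<psi> i"] p1 q1 by (auto simp: vweq_def)
    subgoal using p2 q2 vidl vid Zobj by metis
    subgoal for i using sq_vpaste[OF p3[of i] q3[of i]] by auto
    done
qed

lemma hmor_unit: assumes X: "is_hobj C Z n X" and Y: "is_hobj C Z n Y" and p: "is_hmor C Z n X Y \<phi>"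
  shows "(\<lambda>i. if i \<le> n then vComp C (\<phi> i) (if i \<le> n then vId C (fst X i) else undefined) else undefined) = \<phi>"
    "(\<lambda>i. if i \<le> n then vComp C (if i \<le> n then vId C (fst Y i) else undefined) (\<phi> i) else undefined) = \<phi>"
proof -
  obtain A a where e: "X = (A, a)" by (cases X) auto
  obtain B b where e2: "Y = (B, b)" by (cases Y) auto
  have p1: "\<And>i. i \<le> n \<Longrightarrow> vweq C Z (\<phi> i) \<and> vDom C (\<phi> i) = A i \<and> vCod C (\<phi> i) = B i"
    and p0: "\<And>i. \<not> i \<le> n \<Longrightarrow> \<phi> i = undefined"
    using p unfolding e e2 is_hmor_def by auto
  show "(\<lambda>i. if i \<le> n then vComp C (\<phi> i) (if i \<le> n then vId C (fst X i) else undefined) else undefined) = \<phi>"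
    using p1 p0 vidr unfolding e vweq_def by fastforce
  show "(\<lambda>i. if i \<le> n then vComp C (if i \<le> n then vId C (fst Y i) else undefined) (\<phi> i) else undefined) = \<phi>"
    using p1 p0 vidl unfolding e2 vweq_def by fastforce
qed

lemma sobj_U: assumes X: "is_sobj C Z n X" shows "is_hobj C Z n (U_obj n X)"
  using X unfolding is_sobj_def is_hobj_def U_obj_def by (cases X) auto

lemma smor_U: assumes X: "is_sobj C Z n X" and Y: "is_sobj C Z n Y" and p: "is_smor C Z n X Y \<phi>"
  shows "is_hmor C Z n (U_obj n X) (U_obj n Y) (\<lambda>i. if i \<le> n then \<phi> 0 i else undefined)"
proof -
  obtain A Ah Av where e: "X = (A, Ah, Av)" by (cases X) auto
  obtain B Bh Bv where e2: "Y = (B, Bh, Bv)" by (cases Y) auto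
  have p1: "\<And>j k. j \<le> k \<and> k \<le> n \<Longrightarrow>
        \<phi> j k \<in> vArr C \<and> vDom C (\<phi> j k) = A j k \<and> vCod C (\<phi> j k) = B j k \<and> vweq C Z (\<phi> j k)"
    and p2: "\<And>j k. j \<le> k \<and> k < n \<Longrightarrow> Sq C (Ah j k) (\<phi> j k) (\<phi> j (Suc k)) (Bh j k)"
    using p unfolding e e2 is_smor_def by auto
  have z: "A 0 0 = Z" "B 0 0 = Z" using X Y unfolding e e2 is_sobj_def by auto
  have "\<phi> 0 0 = vId C Z"
    using vterm_eq[of "\<phi> 0 0" "vId C Z"] p1[of 0 0] z vid[OF Zobj] by auto
  then show ?thesis unfolding e e2 is_hmor_def U_obj_def using p1 p2 by auto
qed

end


context isq begin

lemma sobj_cell: assumes "is_sobj C Z n (A, Ah, Av)" "j < k" "k < n"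
  shows "Sq C (Ah j k) (Av j k) (Av j (Suc k)) (Ah (Suc j) k)"
  using assms unfolding is_sobj_def by auto

lemma smor_cell: assumes X: "is_sobj C Z n (A, Ah, Av)" and Y: "is_sobj C Z n (B, Bh, Bv)"
  and p: "is_smor C Z n (A, Ah, Av) (B, Bh, Bv) \<phi>" and jk: "j < k" "k < n"
  shows "sqMor C (Ah j k, Av j k, Av j (Suc k), Ah (Suc j) k) (Bh j k, Bv j k, Bv j (Suc k), Bh (Suc j) k)
     (\<phi> j k, \<phi> j (Suc k), \<phi> (Suc j) k, \<phi> (Suc j) (Suc k))"
proof -
  have p1: "\<And>j k. j \<le> k \<and> k \<le> n \<Longrightarrow>
        \<phi> j k \<in> vArr C \<and> vDom C (\<phi> j k) = A j k \<and> vCod C (\<phi> j k) = B j k \<and> vweq C Z (\<phi> j k)"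
    and p2: "\<And>j k. j \<le> k \<and> k < n \<Longrightarrow> Sq C (Ah j k) (\<phi> j k) (\<phi> j (Suc k)) (Bh j k)"
    and p3: "\<And>j k. j < k \<and> k \<le> n \<Longrightarrow> vComp C (\<phi> (Suc j) k) (Av j k) = vComp C (Bv j k) (\<phi> j k)"
    using p unfolding is_smor_def by auto
  have h: "\<And>j k. j \<le> k \<and> k < n \<Longrightarrow> Ah j k \<in> hArr C \<and> hDom C (Ah j k) = A j k \<and> hCod C (Ah j k) = A j (Suc k)"
    using X unfolding is_sobj_def by auto
  have h2: "\<And>j k. j \<le> k \<and> k < n \<Longrightarrow> Bh j k \<in> hArr C \<and> hDom C (Bh j k) = B j k \<and> hCod C (Bh j k) = B j (Suc k)"
    using Y unfolding is_sobj_def by auto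
  show ?thesis unfolding sqMor_def
    using p1[of j k] p1[of j "Suc k"] p1[of "Suc j" k] p1[of "Suc j" "Suc k"] p2[of j k] p2[of "Suc j" k]
      p3[of j k] p3[of j "Suc k"] h[of j k] h[of "Suc j" k] h2[of j k] h2[of "Suc j" k] jk by auto
qed

lemma faithful_raw: assumes X: "is_sobj C Z n X" and Y: "is_sobj C Z n Y" and p: "is_smor C Z n X Y \<phi>"
  and q: "is_smor C Z n X Y \<psi>" and e0: "\<forall>i\<le>n. \<phi> 0 i = \<psi> 0 i" shows "\<phi> = \<psi>"
proof -
  obtain A Ah Av where e: "X = (A, Ah, Av)" by (cases X) auto
  obtain B Bh Bv where e2: "Y = (B, Bh, Bv)" by (cases Y) auto
  note X' = X[unfolded e] and Y' = Y[unfolded e2] and p' = p[unfolded e e2] and q' = q[unfolded e e2]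
  have p1: "\<And>j k. j \<le> k \<and> k \<le> n \<Longrightarrow>
        \<phi> j k \<in> vArr C \<and> vDom C (\<phi> j k) = A j k \<and> vCod C (\<phi> j k) = B j k"
    and p0: "\<And>j k. \<not> (j \<le> k \<and> k \<le> n) \<Longrightarrow> \<phi> j k = undefined"
    using p' unfolding is_smor_def by auto
  have q1: "\<And>j k. j \<le> k \<and> k \<le> n \<Longrightarrow>
        \<psi> j k \<in> vArr C \<and> vDom C (\<psi> j k) = A j k \<and> vCod C (\<psi> j k) = B j k"
    and q0: "\<And>j k. \<not> (j \<le> k \<and> k \<le> n) \<Longrightarrow> \<psi> j k = undefined"
    using q' unfolding is_smor_def by auto
  have zB: "\<And>j. j \<le> n \<Longrightarrow> B j j = Z" using Y' unfolding is_sobj_def by auto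
  have main: "\<forall>k. j \<le> k \<and> k \<le> n \<longrightarrow> \<phi> j k = \<psi> j k" for j
  proof (induction j)
    case 0 then show ?case using e0 by auto
  next
    case (Suc j)
    show ?case
    proof (intro allI impI)
      fix k assume "Suc j \<le> k \<and> k \<le> n"
      then show "\<phi> (Suc j) k = \<psi> (Suc j) k"
      proof (induction k)
        case 0 then show ?case by simp
      next
        case (Suc k)
        show ?case
        proof (cases "k = j")
          case True
          then show ?thesis using vterm_eq[of "\<phi> (Suc j) (Suc k)" "\<psi> (Suc j) (Suc k)"]
             p1[of "Suc j" "Suc k"] q1[of "Suc j" "Suc k"] zB[of "Suc k"] Suc.prems by auto
        next
          case False
          then have jk: "j < k" "k < n" using Suc.prems by auto
          have ih: "\<phi> (Suc j) k = \<psi> (Suc j) k" using Suc.IH jk by auto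
          have ih2: "\<phi> j k = \<psi> j k" "\<phi> j (Suc k) = \<psi> j (Suc k)" using Suc.prems jk \<open>\<forall>k. j \<le> k \<and> k \<le> n \<longrightarrow> \<phi> j k = \<psi> j k\<close>
            by auto
          show ?thesis
            apply (rule cell_faithful[OF sobj_cell[OF X' jk] sobj_cell[OF Y' jk] smor_cell[OF X' Y' p' jk]])
            using smor_cell[OF X' Y' q' jk] ih ih2 by simp
        qed
      qed
    qed
  qed
  show ?thesis
  proof (intro ext)
    fix j k show "\<phi> j k = \<psi> j k" using main p0 q0 by (cases "j \<le> k \<and> k \<le> n") auto
  qed
qed

end



definition cellof :: "('o, 'h, 'v) sobj \<Rightarrow> nat \<Rightarrow> nat \<Rightarrow> 'h \<times> 'v \<times> 'v \<times> 'h" where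
  "cellof X j k = (case X of (A, Ah, Av) \<Rightarrow> (Ah j k, Av j k, Av j (Suc k), Ah (Suc j) k))"

function liftphi :: "('o, 'h, 'v) dblcat \<Rightarrow> nat \<Rightarrow> ('o, 'h, 'v) sobj \<Rightarrow> ('o, 'h, 'v) sobj \<Rightarrow> (nat \<Rightarrow> 'v)
   \<Rightarrow> 'o \<Rightarrow> nat \<Rightarrow> nat \<Rightarrow> 'v" where
  "liftphi C n X Y \<theta> Z j k = (if \<not> (j \<le> k \<and> k \<le> n) then undefined else if j = 0 then \<theta> k
     else if j = k then vId C Z else
     (SOME td. sqMor C (cellof X (j - 1) (k - 1)) (cellof Y (j - 1) (k - 1))
       (liftphi C n X Y \<theta> Z (j - 1) (k - 1), liftphi C n X Y \<theta> Z (j - 1) k, liftphi C n X Y \<theta> Z j (k - 1), td)))"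
  by pat_completeness auto
termination by (relation "measure (\<lambda>(C, n, X, Y, \<theta>, Z, j, k). j + k)") auto

declare liftphi.simps[simp del]

lemma liftphi_out: "\<not> (j \<le> k \<and> k \<le> n) \<Longrightarrow> liftphi C n X Y \<theta> Z j k = undefined"
  by (subst liftphi.simps) simp
lemma liftphi_0: "k \<le> n \<Longrightarrow> liftphi C n X Y \<theta> Z 0 k = \<theta> k"
  by (subst liftphi.simps) simp
lemma liftphi_diag: "Suc k \<le> n \<Longrightarrow> liftphi C n X Y \<theta> Z (Suc k) (Suc k) = vId C Z"
  by (subst liftphi.simps) simp
lemma liftphi_step: "j < k \<Longrightarrow> Suc k \<le> n \<Longrightarrow> liftphi C n X Y \<theta> Z (Suc j) (Suc k) =
     (SOME td. sqMor C (cellof X j k) (cellof Y j k)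
       (liftphi C n X Y \<theta> Z j k, liftphi C n X Y \<theta> Z j (Suc k), liftphi C n X Y \<theta> Z (Suc j) k, td))"
  by (subst liftphi.simps) simp

context isq begin

lemma full_raw: assumes X: "is_sobj C Z n X" and Y: "is_sobj C Z n Y"
  and th: "is_hmor C Z n (U_obj n X) (U_obj n Y) \<theta>"
  shows "\<exists>\<phi>. is_smor C Z n X Y \<phi> \<and> (\<lambda>i. if i \<le> n then \<phi> 0 i else undefined) = \<theta>"
proof -
  obtain A Ah Av where e: "X = (A, Ah, Av)" by (cases X) auto
  obtain B Bh Bv where e2: "Y = (B, Bh, Bv)" by (cases Y) auto
  note X' = X[unfolded e] and Y' = Y[unfolded e2]
  define \<phi> where "\<phi> = liftphi C n X Y \<theta> Z"
  have th1: "\<And>i. i \<le> n \<Longrightarrow> vweq C Z (\<theta> i) \<and> vDom C (\<theta> i) = A 0 i \<and> vCod C (\<theta> i) = B 0 i"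
    and th0: "\<And>i. \<not> i \<le> n \<Longrightarrow> \<theta> i = undefined"
    and th3: "\<And>i. i < n \<Longrightarrow> Sq C (Ah 0 i) (\<theta> i) (\<theta> (Suc i)) (Bh 0 i)"
    using th unfolding e e2 is_hmor_def U_obj_def by auto
  have Ao: "\<And>j k. j \<le> k \<and> k \<le> n \<Longrightarrow> A j k \<in> dObj C" and Az: "\<And>j. j \<le> n \<Longrightarrow> A j j = Z"
    and Ahh: "\<And>j k. j \<le> k \<and> k < n \<Longrightarrow> Ah j k \<in> hArr C \<and> hDom C (Ah j k) = A j k \<and> hCod C (Ah j k) = A j (Suc k)"
    and Avv: "\<And>j k. j < k \<and> k \<le> n \<Longrightarrow> Av j k \<in> vArr C \<and> vDom C (Av j k) = A j k \<and> vCod C (Av j k) = A (Suc j) k"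
    using X' unfolding is_sobj_def by auto
  have Bo: "\<And>j k. j \<le> k \<and> k \<le> n \<Longrightarrow> B j k \<in> dObj C" and Bz: "\<And>j. j \<le> n \<Longrightarrow> B j j = Z"
    and Bhh: "\<And>j k. j \<le> k \<and> k < n \<Longrightarrow> Bh j k \<in> hArr C \<and> hDom C (Bh j k) = B j k \<and> hCod C (Bh j k) = B j (Suc k)"
    and Bvv: "\<And>j k. j < k \<and> k \<le> n \<Longrightarrow> Bv j k \<in> vArr C \<and> vDom C (Bv j k) = B j k \<and> vCod C (Bv j k) = B (Suc j) k"
    using Y' unfolding is_sobj_def by auto
  have ph0: "\<And>k. k \<le> n \<Longrightarrow> \<phi> 0 k = \<theta> k" unfolding \<phi>_def by (rule liftphi_0)
  have phd: "\<And>k. Suc k \<le> n \<Longrightarrow> \<phi> (Suc k) (Suc k) = vId C Z" unfolding \<phi>_def by (rule liftphi_diag)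
  have pho: "\<And>j k. \<not> (j \<le> k \<and> k \<le> n) \<Longrightarrow> \<phi> j k = undefined" unfolding \<phi>_def by (rule liftphi_out)
  have phs: "\<And>j k. j < k \<Longrightarrow> Suc k \<le> n \<Longrightarrow> \<phi> (Suc j) (Suc k) =
     (SOME td. sqMor C (cellof X j k) (cellof Y j k) (\<phi> j k, \<phi> j (Suc k), \<phi> (Suc j) k, td))"
    unfolding \<phi>_def by (rule liftphi_step)
  define good where "good j k \<longleftrightarrow> \<phi> j k \<in> vArr C \<and> vDom C (\<phi> j k) = A j k \<and> vCod C (\<phi> j k) = B j k \<and> vweq C Z (\<phi> j k)" for j k
  define hor where "hor j k \<longleftrightarrow> Sq C (Ah j k) (\<phi> j k) (\<phi> j (Suc k)) (Bh j k)" for j k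
  define com where "com j k \<longleftrightarrow> vComp C (\<phi> (Suc j) k) (Av j k) = vComp C (Bv j k) (\<phi> j k)" for j k
  have I: "\<forall>k. j \<le> k \<and> k \<le> n \<longrightarrow> good j k \<and> (j < k \<longrightarrow> hor j (k - 1)) \<and> (0 < j \<longrightarrow> com (j - 1) k)" for j
  proof (induction j)
    case 0
    show ?case
    proof (intro allI impI conjI)
      fix k assume k: "0 \<le> k \<and> k \<le> n"
      show "good 0 k" unfolding good_def using ph0 th1[of k] k by (auto simp: vweq_def)
      show "hor 0 (k - 1)" if "0 < k" unfolding hor_def using ph0 th3[of "k - 1"] k that by auto
      show "com (0 - 1) k" if "0 < (0::nat)" using that by simp
    qed
  next
    case (Suc j)
    have R: "good j k \<and> (j < k \<longrightarrow> hor j (k - 1)) \<and> (0 < j \<longrightarrow> com (j - 1) k)" if "j \<le> k \<and> k \<le> n" for k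
      using Suc.IH that by blast
    show ?case
    proof (intro allI impI)
      fix k assume "Suc j \<le> k \<and> k \<le> n"
      then show "good (Suc j) k \<and> (Suc j < k \<longrightarrow> hor (Suc j) (k - 1)) \<and> (0 < Suc j \<longrightarrow> com (Suc j - 1) k)"
      proof (induction k)
        case 0 then show ?case by simp
      next
        case (Suc k)
        show ?case
        proof (cases "k = j")
          case True
          have d: "\<phi> (Suc j) (Suc k) = vId C Z" using phd Suc.prems True by auto
          have g: "good (Suc j) (Suc k)" unfolding good_def d using vid[OF Zobj] vweq_id[OF Zobj] Az Bz Suc.prems True by auto
          have gj: "good j (Suc j)" using R[of "Suc j"] Suc.prems True by auto
          have c: "com j (Suc k)" unfolding com_def
            apply (rule vterm_eq)
            using vcomp[of "Av j (Suc j)" "vId C Z"] vcomp[of "\<phi> j (Suc j)" "Bv j (Suc j)"] gj[unfolded good_def]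
              Avv[of j "Suc j"] Bvv[of j "Suc j"] Suc.prems True d vid[OF Zobj] Az Bz by auto
          show ?thesis using g c True by auto
        next
          case False
          then have jk: "j < k" "k < n" using Suc.prems by auto
          have ih: "good (Suc j) k" "com j k" using Suc.IH jk by auto
          have r1: "good j k" using R[of k] jk by auto
          have r2: "good j (Suc k)" "hor j k" using R[of "Suc k"] jk by auto
          have sp: "((Ah j k, Av j k), (Bh j k, Bv j k), (\<phi> j k, \<phi> j (Suc k), \<phi> (Suc j) k)) \<in> cArr (FunSpan C)"
            unfolding FunSpan_def spanObj_def spanMor_def
            using r1 r2 ih Ahh[of j k] Avv[of j k] Bhh[of j k] Bvv[of j k] jk unfolding good_def hor_def com_def by auto
          obtain td where td: "sqMor C (Ah j k, Av j k, Av j (Suc k), Ah (Suc j) k) (Bh j k, Bv j k, Bv j (Suc k), Bh (Suc j) k)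
              (\<phi> j k, \<phi> j (Suc k), \<phi> (Suc j) k, td)"
            using cell_full[OF sobj_cell[OF X' jk] sobj_cell[OF Y' jk] sp] by blast
          have st: "\<phi> (Suc j) (Suc k) = (SOME td. sqMor C (Ah j k, Av j k, Av j (Suc k), Ah (Suc j) k) (Bh j k, Bv j k, Bv j (Suc k), Bh (Suc j) k)
              (\<phi> j k, \<phi> j (Suc k), \<phi> (Suc j) k, td))"
            using phs[of j k] jk unfolding e e2 cellof_def by simp
          have m: "sqMor C (Ah j k, Av j k, Av j (Suc k), Ah (Suc j) k) (Bh j k, Bv j k, Bv j (Suc k), Bh (Suc j) k)
              (\<phi> j k, \<phi> j (Suc k), \<phi> (Suc j) k, \<phi> (Suc j) (Suc k))"
            unfolding st using td by (rule someI)
          have m': "\<phi> (Suc j) (Suc k) \<in> vArr C" "vDom C (\<phi> (Suc j) (Suc k)) = hCod C (Ah (Suc j) k)"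
            "vCod C (\<phi> (Suc j) (Suc k)) = hCod C (Bh (Suc j) k)"
            "Sq C (Ah (Suc j) k) (\<phi> (Suc j) k) (\<phi> (Suc j) (Suc k)) (Bh (Suc j) k)"
            "vComp C (\<phi> (Suc j) (Suc k)) (Av j (Suc k)) = vComp C (Bv j (Suc k)) (\<phi> j (Suc k))"
            using m unfolding sqMor_def by auto
          have "vweq C Z (\<phi> (Suc j) (Suc k))" using vweq_paste m'(4) ih(1) unfolding good_def by blast
          then show ?thesis using m' Ahh[of "Suc j" k] Bhh[of "Suc j" k] jk
            unfolding good_def hor_def com_def by auto
        qed
      qed
    qed
  qed
  have s1: "\<forall>j k. \<not> (j \<le> k \<and> k \<le> n) \<longrightarrow> \<phi> j k = undefined" using pho by metis
  have s2: "\<forall>j k. j \<le> k \<and> k \<le> n \<longrightarrow> \<phi> j k \<in> vArr C \<and> vDom C (\<phi> j k) = A j k \<and> vCod C (\<phi> j k) = B j k \<and>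
        vweq C Z (\<phi> j k)" using I unfolding good_def by blast
  have s3: "\<forall>j k. j \<le> k \<and> k < n \<longrightarrow> Sq C (Ah j k) (\<phi> j k) (\<phi> j (Suc k)) (Bh j k)"
  proof (intro allI impI)
    fix j k assume "j \<le> k \<and> k < n"
    then have "j \<le> Suc k \<and> Suc k \<le> n" by auto
    then have "j < Suc k \<longrightarrow> hor j (Suc k - 1)" using I[of j] by blast
    then show "Sq C (Ah j k) (\<phi> j k) (\<phi> j (Suc k)) (Bh j k)" unfolding hor_def using \<open>j \<le> k \<and> k < n\<close> by simp
  qed
  have s4: "\<forall>j k. j < k \<and> k \<le> n \<longrightarrow> vComp C (\<phi> (Suc j) k) (Av j k) = vComp C (Bv j k) (\<phi> j k)"
  proof (intro allI impI)
    fix j k assume "j < k \<and> k \<le> n"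
    then show "vComp C (\<phi> (Suc j) k) (Av j k) = vComp C (Bv j k) (\<phi> j k)" using I[of "Suc j"] unfolding com_def by auto
  qed
  have sm: "is_smor C Z n X Y \<phi>"
    unfolding e e2 is_smor_def using s1 s2 s3 s4 by simp
  have "(\<lambda>i. if i \<le> n then \<phi> 0 i else undefined) = \<theta>"
    using th0 ph0 by fastforce
  then show ?thesis using sm by blast
qed

end



definition sqR :: "'h \<times> 'v \<times> 'v \<times> 'h \<Rightarrow> 'v" where "sqR X = fst (snd (snd X))"
definition sqB :: "'h \<times> 'v \<times> 'v \<times> 'h \<Rightarrow> 'h" where "sqB X = snd (snd (snd X))"

function Qc :: "('o, 'h, 'v) dblcat \<Rightarrow> 'o \<Rightarrow> ('h \<times> 'v \<Rightarrow> 'h \<times> 'v \<times> 'v \<times> 'h) \<Rightarrow> (nat \<Rightarrow> 'h)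
    \<Rightarrow> nat \<Rightarrow> nat \<Rightarrow> 'h \<times> 'v \<times> 'v \<times> 'h" where
  "Qc C Z S a j k = (if \<not> j < k then undefined else
     S (if j = 0 then a k else sqB (Qc C Z S a (j - 1) k),
        if k = Suc j then vterm C Z (hDom C (if j = 0 then a k else sqB (Qc C Z S a (j - 1) k)))
        else sqR (Qc C Z S a j (k - 1))))"
  by pat_completeness auto
termination by (relation "measure (\<lambda>(C, Z, S, a, j, k). j + k)") auto

declare Qc.simps[simp del]

definition SA where "SA C Z S n A a j k = (if j \<le> k \<and> k \<le> n then (if j = k then Z else if j = 0 then A k
    else hCod C (sqB (Qc C Z S a (j - 1) (k - 1)))) else undefined)"
definition SAh where "SAh C Z S n a j k = (if j \<le> k \<and> k < n then (if j = 0 then a k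
    else sqB (Qc C Z S a (j - 1) k)) else undefined)"
definition SAv where "SAv C Z S n A a j k = (if j < k \<and> k \<le> n then (if k = Suc j then vterm C Z (SA C Z S n A a j k)
    else sqR (Qc C Z S a j (k - 1))) else undefined)"

context isq begin

lemma sec_obj: assumes Y: "is_hobj C Z n (A, a)"
  shows "is_sobj C Z n (SA C Z (fst s) n A a, SAh C Z (fst s) n a, SAv C Z (fst s) n A a) \<and>
         U_obj n (SA C Z (fst s) n A a, SAh C Z (fst s) n a, SAv C Z (fst s) n A a) = (A, a)"
proof -
  define S where "S = fst s"
  define Q where "Q = Qc C Z S a"
  define SA' where "SA' = SA C Z S n A a"
  define SAh' where "SAh' = SAh C Z S n a"
  define SAv' where "SAv' = SAv C Z S n A a"
  have A0: "A 0 = Z" and Ao: "\<And>i. i \<le> n \<Longrightarrow> A i \<in> dObj C"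
    and aa: "\<And>i. i < n \<Longrightarrow> a i \<in> hArr C \<and> hDom C (a i) = A i \<and> hCod C (a i) = A (Suc i)"
    and Au: "\<And>i. \<not> i \<le> n \<Longrightarrow> A i = undefined" and au: "\<And>i. \<not> i < n \<Longrightarrow> a i = undefined"
    using Y unfolding is_hobj_def by auto
  have Qeq: "Q j k = S (if j = 0 then a k else sqB (Q (j - 1) k),
        if k = Suc j then vterm C Z (hDom C (if j = 0 then a k else sqB (Q (j - 1) k)))
        else sqR (Q j (k - 1)))" if "j < k" for j k
    unfolding Q_def using that by (subst Qc.simps) simp
  have SAe: "SA' j k = (if j \<le> k \<and> k \<le> n then (if j = k then Z else if j = 0 then A k
    else hCod C (sqB (Q (j - 1) (k - 1)))) else undefined)" for j k unfolding SA'_def SA_def Q_def by simp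
  have SAhe: "SAh' j k = (if j \<le> k \<and> k < n then (if j = 0 then a k
    else sqB (Q (j - 1) k)) else undefined)" for j k unfolding SAh'_def SAh_def Q_def by simp
  have SAve: "SAv' j k = (if j < k \<and> k \<le> n then (if k = Suc j then vterm C Z (SA' j k)
    else sqR (Q j (k - 1))) else undefined)" for j k unfolding SAv'_def SAv_def SA'_def Q_def by simp
  define Inv where "Inv j k \<longleftrightarrow> Q j k = (SAh' j k, SAv' j k, SAv' j (Suc k), SAh' (Suc j) k) \<and>
     Sq C (SAh' j k) (SAv' j k) (SAv' j (Suc k)) (SAh' (Suc j) k) \<and>
     SAh' j k \<in> hArr C \<and> hDom C (SAh' j k) = SA' j k \<and> hCod C (SAh' j k) = SA' j (Suc k) \<and>
     SAv' j k \<in> vArr C \<and> vDom C (SAv' j k) = SA' j k \<and> vCod C (SAv' j k) = SA' (Suc j) k \<and>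
     SAh' (Suc j) k \<in> hArr C \<and> hDom C (SAh' (Suc j) k) = SA' (Suc j) k \<and> hCod C (SAh' (Suc j) k) = SA' (Suc j) (Suc k) \<and>
     SAv' j (Suc k) \<in> vArr C \<and> vDom C (SAv' j (Suc k)) = SA' j (Suc k) \<and> vCod C (SAv' j (Suc k)) = SA' (Suc j) (Suc k)" for j k
  have inv: "j < k \<Longrightarrow> k < n \<Longrightarrow> Inv j k" for j k
  proof (induction "j + k" arbitrary: j k rule: less_induct)
    case less
    define T where "T = (if j = 0 then a k else sqB (Q (j - 1) k))"
    have T: "T = SAh' j k" unfolding T_def SAhe using less.prems by simp
    have Tt: "T \<in> hArr C \<and> hDom C T = SA' j k \<and> hCod C T = SA' j (Suc k)"
    proof (cases "j = 0")
      case True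
      then show ?thesis using aa[of k] less.prems A0 unfolding T SAhe SAe by auto
    next
      case False
      then have "Inv (j - 1) k" using less by auto
      then show ?thesis unfolding T Inv_def using False by simp
    qed
    define L where "L = (if k = Suc j then vterm C Z (hDom C T) else sqR (Q j (k - 1)))"
    have L: "L = SAv' j k" unfolding L_def SAve using less.prems Tt by simp
    have Lt: "L \<in> vArr C \<and> vDom C L = SA' j k \<and> vCod C L = SA' (Suc j) k"
    proof (cases "k = Suc j")
      case True
      have "SA' j k \<in> dObj C" using Tt hdc by metis
      moreover have "SA' (Suc j) k = Z" using SAe True less.prems by simp
      ultimately show ?thesis using vterm[of "SA' j k"] True Tt unfolding L_def by simp
    next
      case False
      then have "Inv j (k - 1)" using less by auto
      then show ?thesis unfolding L Inv_def using False less.prems by (cases k) auto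
    qed
    have Qjk: "Q j k = S (T, L)" unfolding Qeq[OF less.prems(1)] T_def L_def by simp
    obtain r b where rb: "S (T, L) = (T, L, r, b)" "Sq C T L r b" using s_sq[of T L] Tt Lt unfolding S_def by auto
    have r: "r = SAv' j (Suc k)" unfolding SAve using Qjk rb less.prems unfolding sqR_def by simp
    have b: "b = SAh' (Suc j) k" unfolding SAhe using Qjk rb less.prems unfolding sqB_def by simp
    have bc: "SA' (Suc j) (Suc k) = hCod C b" unfolding SAe using Qjk rb less.prems unfolding sqB_def by simp
    note t = sq_typ[OF rb(2)]
    show ?case unfolding Inv_def using Qjk rb t r b bc T L Tt Lt by auto
  qed
  have SAo: "SA' j k \<in> dObj C" if jk: "j \<le> k \<and> k \<le> n" for j k
  proof -
    consider "j = k" | "j = 0" "j \<noteq> k" | "0 < j" "j < k" using jk by force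
    then show ?thesis
    proof cases
      case 1 then show ?thesis using SAe Zobj that by simp
    next
      case 2 then show ?thesis using SAe Ao that by simp
    next
      case 3
      then have "Inv (j - 1) (k - 1)" using inv that by auto
      then have "SAh' j (k - 1) \<in> hArr C \<and> hCod C (SAh' j (k - 1)) = SA' j k"
        unfolding Inv_def using 3 by (cases k) auto
      then show ?thesis using hdc by metis
    qed
  qed
  have SAz: "SA' j j = Z" if "j \<le> n" for j using SAe that by simp
  have SAht: "SAh' j k \<in> hArr C \<and> hDom C (SAh' j k) = SA' j k \<and> hCod C (SAh' j k) = SA' j (Suc k)"
    if "j \<le> k \<and> k < n" for j k
  proof (cases "j = 0")
    case True
    then show ?thesis using aa[of k] that A0 unfolding SAhe SAe by auto
  next
    case False
    then have "Inv (j - 1) k" using inv that by auto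
    then show ?thesis unfolding Inv_def using False by simp
  qed
  have SAvt: "SAv' j k \<in> vArr C \<and> vDom C (SAv' j k) = SA' j k \<and> vCod C (SAv' j k) = SA' (Suc j) k"
    if "j < k \<and> k \<le> n" for j k
  proof (cases "k = Suc j")
    case True
    have "SA' j k \<in> dObj C" using SAo that by simp
    then show ?thesis using vterm[of "SA' j k"] True that unfolding SAve SAe by simp
  next
    case False
    then have "Inv j (k - 1)" using inv that by auto
    then show ?thesis unfolding Inv_def using False that by (cases k) auto
  qed
  have SAsq: "Sq C (SAh' j k) (SAv' j k) (SAv' j (Suc k)) (SAh' (Suc j) k)" if "j < k \<and> k < n" for j k
    using inv that unfolding Inv_def by blast
  have so: "is_sobj C Z n (SA', SAh', SAv')"
    unfolding is_sobj_def using SAo SAz SAht SAvt SAsq by (simp add: SAe SAhe SAve)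
  have uo: "U_obj n (SA', SAh', SAv') = (A, a)"
    unfolding U_obj_def using A0 Au au by (auto simp: SAe SAhe)
  show ?thesis using so uo unfolding SA'_def SAh'_def SAv'_def S_def by simp
qed

lemma sec_raw: "\<exists>Go. \<forall>Y. is_hobj C Z n Y \<longrightarrow> is_sobj C Z n (Go Y) \<and> U_obj n (Go Y) = Y"
proof -
  have "\<forall>Y. is_hobj C Z n Y \<longrightarrow> is_sobj C Z n ((\<lambda>(A, a). (SA C Z (fst s) n A a, SAh C Z (fst s) n a, SAv C Z (fst s) n A a)) Y)
     \<and> U_obj n ((\<lambda>(A, a). (SA C Z (fst s) n A a, SAh C Z (fst s) n a, SAv C Z (fst s) n A a)) Y) = Y"
    using sec_obj by auto
  then show ?thesis by blast
qed

end


context isq begin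

lemma U_equiv: "equivalence_of_categories (SCat C Z n) (HCat C Z n) (U_functor n)"
proof -
  obtain Go where Go: "\<And>Y. is_hobj C Z n Y \<Longrightarrow> is_sobj C Z n (Go Y) \<and> U_obj n (Go Y) = Y" using sec_raw by blast
  have F: "is_functor (SCat C Z n) (HCat C Z n) (U_functor n)"
    unfolding is_functor_def
  proof (intro conjI)
    show "\<forall>x\<in>cObj (SCat C Z n). fst (U_functor n) x \<in> cObj (HCat C Z n)"
      using sobj_U unfolding SCat_def HCat_def U_functor_def by auto
    show "\<forall>f\<in>cArr (SCat C Z n). snd (U_functor n) f \<in> cArr (HCat C Z n) \<and>
        cDom (HCat C Z n) (snd (U_functor n) f) = fst (U_functor n) (cDom (SCat C Z n) f) \<and>
        cCod (HCat C Z n) (snd (U_functor n) f) = fst (U_functor n) (cCod (SCat C Z n) f)"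
      using sobj_U smor_U unfolding SCat_def HCat_def U_functor_def U_arr_def by auto
    show "\<forall>x\<in>cObj (SCat C Z n). snd (U_functor n) (cId (SCat C Z n) x) = cId (HCat C Z n) (fst (U_functor n) x)"
      unfolding SCat_def HCat_def U_functor_def U_arr_def U_obj_def by (auto split: prod.splits)
    show "\<forall>f\<in>cArr (SCat C Z n). \<forall>g\<in>cArr (SCat C Z n). cCod (SCat C Z n) f = cDom (SCat C Z n) g \<longrightarrow>
        snd (U_functor n) (cComp (SCat C Z n) g f) = cComp (HCat C Z n) (snd (U_functor n) g) (snd (U_functor n) f)"
      unfolding SCat_def HCat_def U_functor_def U_arr_def by (auto split: prod.splits)
  qed
  show ?thesis
  proof (rule equiv_from_ff[OF _ _ _ _ _ _ _ F, where Go=Go])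
    show "cId (SCat C Z n) x \<in> cArr (SCat C Z n) \<and> cDom (SCat C Z n) (cId (SCat C Z n) x) = x \<and>
      cCod (SCat C Z n) (cId (SCat C Z n) x) = x" if "x \<in> cObj (SCat C Z n)" for x
      using that smor_id unfolding SCat_def by auto
    show "cComp (SCat C Z n) g f \<in> cArr (SCat C Z n) \<and> cDom (SCat C Z n) (cComp (SCat C Z n) g f) = cDom (SCat C Z n) f \<and>
       cCod (SCat C Z n) (cComp (SCat C Z n) g f) = cCod (SCat C Z n) g"
      if "f \<in> cArr (SCat C Z n)" "g \<in> cArr (SCat C Z n)" "cCod (SCat C Z n) f = cDom (SCat C Z n) g" for f g
      using that smor_comp unfolding SCat_def by auto
    show "cDom (SCat C Z n) f \<in> cObj (SCat C Z n) \<and> cCod (SCat C Z n) f \<in> cObj (SCat C Z n)"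
      if "f \<in> cArr (SCat C Z n)" for f using that unfolding SCat_def by auto
    show "cId (HCat C Z n) x \<in> cArr (HCat C Z n) \<and> cDom (HCat C Z n) (cId (HCat C Z n) x) = x \<and>
      cCod (HCat C Z n) (cId (HCat C Z n) x) = x" if "x \<in> cObj (HCat C Z n)" for x
      using that hmor_id unfolding HCat_def by auto
    show "cComp (HCat C Z n) g f \<in> cArr (HCat C Z n) \<and> cDom (HCat C Z n) (cComp (HCat C Z n) g f) = cDom (HCat C Z n) f \<and>
       cCod (HCat C Z n) (cComp (HCat C Z n) g f) = cCod (HCat C Z n) g"
      if "f \<in> cArr (HCat C Z n)" "g \<in> cArr (HCat C Z n)" "cCod (HCat C Z n) f = cDom (HCat C Z n) g" for f g
      using that hmor_comp unfolding HCat_def by auto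
    show "cDom (HCat C Z n) f \<in> cObj (HCat C Z n) \<and> cCod (HCat C Z n) f \<in> cObj (HCat C Z n)"
      if "f \<in> cArr (HCat C Z n)" for f using that unfolding HCat_def by auto
    show "cComp (HCat C Z n) f (cId (HCat C Z n) (cDom (HCat C Z n) f)) = f \<and>
          cComp (HCat C Z n) (cId (HCat C Z n) (cCod (HCat C Z n) f)) f = f"
      if "f \<in> cArr (HCat C Z n)" for f using that hmor_unit unfolding HCat_def by auto
    show "f = f'" if "f \<in> cArr (SCat C Z n)" "f' \<in> cArr (SCat C Z n)" "cDom (SCat C Z n) f = cDom (SCat C Z n) f'"
      "cCod (SCat C Z n) f = cCod (SCat C Z n) f'" "snd (U_functor n) f = snd (U_functor n) f'" for f f'
    proof -
      obtain X Y \<phi> where f: "f = (X, Y, \<phi>)" by (cases f) auto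
      obtain X' Y' \<psi> where f': "f' = (X', Y', \<psi>)" by (cases f') auto
      have "X' = X" "Y' = Y" using that unfolding f f' SCat_def by auto
      then have a: "is_sobj C Z n X" "is_sobj C Z n Y" "is_smor C Z n X Y \<phi>" "is_smor C Z n X Y \<psi>"
        using that unfolding f f' SCat_def by auto
      have "(\<lambda>i. if i \<le> n then \<phi> 0 i else undefined) = (\<lambda>i. if i \<le> n then \<psi> 0 i else undefined)"
        using that(5) unfolding f f' U_functor_def U_arr_def by auto
      then have "\<forall>i\<le>n. \<phi> 0 i = \<psi> 0 i" by (metis)
      then show ?thesis using faithful_raw[OF a] f f' \<open>X' = X\<close> \<open>Y' = Y\<close> by simp
    qed
    show "\<exists>f\<in>cArr (SCat C Z n). cDom (SCat C Z n) f = x \<and> cCod (SCat C Z n) f = y \<and> snd (U_functor n) f = g"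
      if "x \<in> cObj (SCat C Z n)" "y \<in> cObj (SCat C Z n)" "g \<in> cArr (HCat C Z n)"
        "cDom (HCat C Z n) g = fst (U_functor n) x" "cCod (HCat C Z n) g = fst (U_functor n) y" for x y g
    proof -
      obtain X Y \<theta> where g: "g = (X, Y, \<theta>)" by (cases g) auto
      have a: "is_sobj C Z n x" "is_sobj C Z n y" "is_hmor C Z n (U_obj n x) (U_obj n y) \<theta>"
        using that unfolding g SCat_def HCat_def U_functor_def by auto
      obtain \<phi> where p: "is_smor C Z n x y \<phi>" "(\<lambda>i. if i \<le> n then \<phi> 0 i else undefined) = \<theta>"
        using full_raw[OF a] by blast
      show ?thesis
        apply (rule bexI[where x="(x, y, \<phi>)"])
        using that a p unfolding g SCat_def HCat_def U_functor_def U_arr_def by auto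
    qed
    show "Go y \<in> cObj (SCat C Z n) \<and> fst (U_functor n) (Go y) = y" if "y \<in> cObj (HCat C Z n)" for y
      using Go that unfolding SCat_def HCat_def U_functor_def by auto
  qed
qed

end

theorem lemma3p25:
  fixes C :: "('o, 'h, 'v) dblcat" and Z :: 'o and n :: nat
  assumes "isostable C Z"
  shows "equivalence_of_categories (SCat C Z n) (HCat C Z n) (U_functor n)"
proof -
  have st: "stable C Z" using assms unfolding isostable_def by blast
  then obtain s where s1: "is_functor (FunSpan C) (FunSq C) s"
    and s2: "\<forall>X\<in>cObj (FunSpan C). fst istar (fst s X) = X"
    and s3: "\<forall>\<phi>\<in>cArr (FunSpan C). snd istar (snd s \<phi>) = \<phi>"
    and s4: "\<exists>w. is_nat_trans (FunSq C) (FunSq C) (fcomp s istar) fid w \<and>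
           (\<forall>X\<in>cObj (FunSq C).
              compA (w X) = vId C (cornerA C X) \<and>
              compB (w X) = vId C (cornerB C X) \<and>
              compC (w X) = vId C (cornerC C X))"
    unfolding stable_def by blast
  then obtain w where w1: "is_nat_trans (FunSq C) (FunSq C) (fcomp s istar) fid w"
    and w2: "\<forall>X\<in>cObj (FunSq C).
              compA (w X) = vId C (cornerA C X) \<and>
              compB (w X) = vId C (cornerB C X) \<and>
              compC (w X) = vId C (cornerC C X)" by blast
  interpret isq C Z s w using assms s1 s2 s3 w1 w2 by unfold_locales
  show ?thesis by (rule U_equiv)
qed

end
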